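(* For all well-typed terms $\Gamma\vdash t:A$ and $\Gamma\vdash u:A$ of $\lambda^{S}$: $\Gamma\vdash t\equiv u:A$ holds in $\lambda^{S}$ if and only if $[\![t]\!]=[\![u]\!]:[\![\Gamma]\!]\to[\![A]\!]$ in every categorical model of $\lambda^{S}$ (i.e. every cartesian closed category equipped with a strong endofunctor, for every choice of interpretation of the base type).
   Context: Types: $A,B ::= \iota \mid 1 \mid A\times B \mid A\to B \mid \Diamond A$, where $\iota$ is a base type. A context $\Gamma$ is a list $x_1:A_1,\dots,x_n:A_n$ of distinct variables. Terms of the simply typed part: variables, $()$, $\langle t,u\rangle$, $\mathsf{fst}\,t$, $\mathsf{snd}\,t$, $\lambda x.t$, $t\,u$, with the standard typing rules. Modal term formers: (letmap) if $\Gamma\vdash t:\Diamond A$ and $\Gamma,x:A\vdash u:B$ then $\Gamma\vdash \mathsf{letmap}\ x=t\ \mathsf{in}\ u:\Diamond B$; (ret) if $\Gamma\vdash t:A$ then $\Gamma\vdash\mathsf{ret}\,t:\Diamond A$; (let) if $\Gamma\vdash t:\Diamond A$ and $\Gamma,x:A\vdash u:\Diamond B$ then $\Gamma\vdash\mathsf{let}\ x=t\ \mathsf{in}\ u:\Diamond B$. The calculus $\lambda^{S}$ has only letmap; $\lambda^{SR}$ has letmap and ret; $\lambda^{SJ}$ has letmap and let; $\lambda^{ML}$ (Moggi's monadic metalanguage) has ret and let. The equational theory $\Gamma\vdash t\equiv u:A$ of each calculus is the least congruence on well-typed terms (equivalence relation compatible with all term formers) containing the $\beta\eta$-laws of the simply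 typed lambda calculus ($t\equiv()$ for $t:1$; $t\equiv\langle\mathsf{fst}\,t,\mathsf{snd}\,t\rangle$; $\mathsf{fst}\langle t,u\rangle\equiv t$; $\mathsf{snd}\langle t,u\rangle\equiv u$; $t\equiv\lambda x.\,t\,x$ with $x$ fresh; $(\lambda x.t)\,u\equiv t[u/x]$) and the following modal laws, each included in the indicated calculi (terms are implicitly weakened into larger contexts where needed; $t[u/x]$ is capture-avoiding substitution): (letmap-$\eta$) $t\equiv\mathsf{letmap}\ x=t\ \mathsf{in}\ x$ [$\lambda^{S},\lambda^{SR},\lambda^{SJ}$]; (letmap-$\beta$) $\mathsf{letmap}\ y=(\mathsf{letmap}\ x=t\ \mathsf{in}\ u)\ \mathsf{in}\ u'\equiv\mathsf{letmap}\ x=t\ \mathsf{in}\ u'[u/y]$ [$\lambda^{S},\lambda^{SR},\lambda^{SJ}$]; (ret-letmap) $\mathsf{letmap}\ x=\mathsf{ret}\,t\ \mathsf{in}\ u\equiv\mathsf{ret}(u[t/x])$ [$\lambda^{SR}$]; (let-letmap) $\mathsf{let}\ y=(\mathsf{letmap}\ x=t\ \mathsf{in}\ u)\ \mathsf{in}\ u'\equiv\mathsf{let}\ x=t\ \mathsf{in}\ u'[u/y]$ [$\lambda^{SJ}$]; (com) $\mathsf{letmap}\ y=(\mathsf{let}\ x=t\ \mathsf{in}\ u)\ \mathsf{in}\ u'\equiv\mathsf{let}\ x=t\ \mathsf{in}\ (\mathsf{letmap}\ y=u\ \mathsf{in}\ u')$ [$\lambda^{SJ}$]; (ass) $\mathsf{let}\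 y=(\mathsf{let}\ x=t\ \mathsf{in}\ u)\ \mathsf{in}\ u'\equiv\mathsf{let}\ x=t\ \mathsf{in}\ (\mathsf{let}\ y=u\ \mathsf{in}\ u')$ [$\lambda^{SJ},\lambda^{ML}$]; (ML-$\beta$) $\mathsf{let}\ x=\mathsf{ret}\,t\ \mathsf{in}\ u\equiv u[t/x]$ [$\lambda^{ML}$]; (ML-$\eta$) $t\equiv\mathsf{let}\ x=t\ \mathsf{in}\ \mathsf{ret}\,x$ [$\lambda^{ML}$]. Categorical models: a categorical model of $\lambda^{S}$ is a cartesian closed category $\mathcal C$ with an endofunctor $D$ and a strength $\mathrm{st}_{X,Y}:X\times DY\to D(X\times Y)$ natural in $X,Y$ satisfying $D\pi_2\circ\mathrm{st}_{1,X}=\pi_2$ and $D\alpha\circ\mathrm{st}_{X\times Y,Z}=\mathrm{st}_{X,Y\times Z}\circ(\mathrm{id}\times\mathrm{st}_{Y,Z})\circ\alpha$ ($\alpha$ the associator). Given an object interpreting $\iota$, types are interpreted by $[\![1]\!]$ terminal, products, exponentials, $[\![\Diamond A]\!]=D[\![A]\!]$; contexts by iterated products starting from the terminal object; simply typed terms in the standard cartesian closed way, and $[\![\mathsf{letmap}\ x=t\ \mathsf{in}\ u]\!]=D[\![u]\!]\circ\mathrm{st}\circ\langle\mathrm{id},[\![t]\!]\rangle$. *)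

theory Defs
  imports Main
begin

datatype ty = Base | One | Prod ty ty | Arr ty ty | Dia ty

text \<open>Variables are de Bruijn indices; Var 0 is the most recently bound
 variable, i.e. the head of the context list. Letmap t u stands for (letmap x = t in u), the
 variable x being bound in u as index 0.\<close>
datatype tm = Var nat | Unit | Pair tm tm | Fst tm | Snd tm
  | Lam ty tm | App tm tm | Letmap tm tm

text \<open>A context x_1:A_1,...,x_n:A_n is the list [A_n, ..., A_1].\<close>
inductive typing :: "ty list \<Rightarrow> tm \<Rightarrow> ty \<Rightarrow> bool" where
  T_Var: "i < length \<Gamma> \<Longrightarrow> typing \<Gamma> (Var i) (\<Gamma> ! i)"
| T_Unit: "typing \<Gamma> Unit One"
| T_Pair: "typing \<Gamma> t A \<Longrightarrow> typing \<Gamma> u B \<Longrightarrow> typing \<Gamma> (Pair t u) (Prod A B)"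
| T_Fst: "typing \<Gamma> t (Prod A B) \<Longrightarrow> typing \<Gamma> (Fst t) A"
| T_Snd: "typing \<Gamma> t (Prod A B) \<Longrightarrow> typing \<Gamma> (Snd t) B"
| T_Lam: "typing (A # \<Gamma>) t B \<Longrightarrow> typing \<Gamma> (Lam A t) (Arr A B)"
| T_App: "typing \<Gamma> t (Arr A B) \<Longrightarrow> typing \<Gamma> u A \<Longrightarrow> typing \<Gamma> (App t u) B"
| T_Letmap: "typing \<Gamma> t (Dia A) \<Longrightarrow> typing (A # \<Gamma>) u B \<Longrightarrow> typing \<Gamma> (Letmap t u) (Dia B)"

primrec lift :: "tm \<Rightarrow> nat \<Rightarrow> tm" where
  "lift (Var i) k = (if i < k then Var i else Var (Suc i))"
| "lift Unit k = Unit"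
| "lift (Pair t u) k = Pair (lift t k) (lift u k)"
| "lift (Fst t) k = Fst (lift t k)"
| "lift (Snd t) k = Snd (lift t k)"
| "lift (Lam A t) k = Lam A (lift t (Suc k))"
| "lift (App t u) k = App (lift t k) (lift u k)"
| "lift (Letmap t u) k = Letmap (lift t k) (lift u (Suc k))"

primrec subst :: "tm \<Rightarrow> nat \<Rightarrow> tm \<Rightarrow> tm" where
  "subst (Var i) k s = (if i < k then Var i else if i = k then s else Var (i - 1))"
| "subst Unit k s = Unit"
| "subst (Pair t u) k s = Pair (subst t k s) (subst u k s)"
| "subst (Fst t) k s = Fst (subst t k s)"
| "subst (Snd t) k s = Snd (subst t k s)"
| "subst (Lam A t) k s = Lam A (subst t (Suc k) (lift s 0))"
| "subst (App t u) k s = App (subst t k s) (subst u k s)"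
| "subst (Letmap t u) k s = Letmap (subst t k s) (subst u (Suc k) (lift s 0))"

inductive eqv :: "ty list \<Rightarrow> tm \<Rightarrow> tm \<Rightarrow> ty \<Rightarrow> bool" where
  E_refl: "typing \<Gamma> t A \<Longrightarrow> eqv \<Gamma> t t A"
| E_sym: "eqv \<Gamma> t u A \<Longrightarrow> eqv \<Gamma> u t A"
| E_trans: "eqv \<Gamma> t u A \<Longrightarrow> eqv \<Gamma> u v A \<Longrightarrow> eqv \<Gamma> t v A"
| C_Pair: "eqv \<Gamma> t t' A \<Longrightarrow> eqv \<Gamma> u u' B \<Longrightarrow> eqv \<Gamma> (Pair t u) (Pair t' u') (Prod A B)"
| C_Fst: "eqv \<Gamma> t t' (Prod A B) \<Longrightarrow> eqv \<Gamma> (Fst t) (Fst t') A"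
| C_Snd: "eqv \<Gamma> t t' (Prod A B) \<Longrightarrow> eqv \<Gamma> (Snd t) (Snd t') B"
| C_Lam: "eqv (A # \<Gamma>) t t' B \<Longrightarrow> eqv \<Gamma> (Lam A t) (Lam A t') (Arr A B)"
| C_App: "eqv \<Gamma> t t' (Arr A B) \<Longrightarrow> eqv \<Gamma> u u' A \<Longrightarrow> eqv \<Gamma> (App t u) (App t' u') B"
| C_Letmap: "eqv \<Gamma> t t' (Dia A) \<Longrightarrow> eqv (A # \<Gamma>) u u' B
     \<Longrightarrow> eqv \<Gamma> (Letmap t u) (Letmap t' u') (Dia B)"
| unit_eta: "typing \<Gamma> t One \<Longrightarrow> eqv \<Gamma> t Unit One"
| pair_eta: "typing \<Gamma> t (Prod A B) \<Longrightarrow> eqv \<Gamma> t (Pair (Fst t) (Snd t)) (Prod A B)"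
| fst_beta: "typing \<Gamma> t A \<Longrightarrow> typing \<Gamma> u B \<Longrightarrow> eqv \<Gamma> (Fst (Pair t u)) t A"
| snd_beta: "typing \<Gamma> t A \<Longrightarrow> typing \<Gamma> u B \<Longrightarrow> eqv \<Gamma> (Snd (Pair t u)) u B"
| fun_eta: "typing \<Gamma> t (Arr A B) \<Longrightarrow> eqv \<Gamma> t (Lam A (App (lift t 0) (Var 0))) (Arr A B)"
| fun_beta: "typing (A # \<Gamma>) t B \<Longrightarrow> typing \<Gamma> u A \<Longrightarrow> eqv \<Gamma> (App (Lam A t) u) (subst t 0 u) B"
| letmap_eta: "typing \<Gamma> t (Dia A) \<Longrightarrow> eqv \<Gamma> t (Letmap t (Var 0)) (Dia A)"
| letmap_beta: "typing \<Gamma> t (Dia A) \<Longrightarrow> typing (A # \<Gamma>) u B \<Longrightarrow> typing (B # \<Gamma>) u' C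
     \<Longrightarrow> eqv \<Gamma> (Letmap (Letmap t u) u') (Letmap t (subst (lift u' 1) 0 u)) (Dia C)"

record ('o, 'm) sccc =
  Obj :: "'o set"
  Ar :: "'m set"
  dom :: "'m \<Rightarrow> 'o"
  cod :: "'m \<Rightarrow> 'o"
  comp :: "'m \<Rightarrow> 'm \<Rightarrow> 'm"   \<comment> \<open>comp g f = g \<circ> f\<close>
  idm :: "'o \<Rightarrow> 'm"
  trm :: "'o"
  bang :: "'o \<Rightarrow> 'm"
  prd :: "'o \<Rightarrow> 'o \<Rightarrow> 'o"
  pr1 :: "'o \<Rightarrow> 'o \<Rightarrow> 'm"
  pr2 :: "'o \<Rightarrow> 'o \<Rightarrow> 'm"
  tup :: "'m \<Rightarrow> 'm \<Rightarrow> 'm"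
  ex :: "'o \<Rightarrow> 'o \<Rightarrow> 'o"       \<comment> \<open>ex X Y = Y^X\<close>
  ev :: "'o \<Rightarrow> 'o \<Rightarrow> 'm"       \<comment> \<open>ev X Y : Y^X \<times> X \<rightarrow> Y\<close>
  cur :: "'o \<Rightarrow> 'o \<Rightarrow> 'o \<Rightarrow> 'm \<Rightarrow> 'm"  \<comment> \<open>cur Z X Y f : Z \<rightarrow> Y^X for f : Z \<times> X \<rightarrow> Y\<close>
  DO :: "'o \<Rightarrow> 'o"
  DA :: "'m \<Rightarrow> 'm"
  st :: "'o \<Rightarrow> 'o \<Rightarrow> 'm"       \<comment> \<open>st X Y : X \<times> D Y \<rightarrow> D (X \<times> Y)\<close>

definition hom :: "('o, 'm, 'z) sccc_scheme \<Rightarrow> 'o \<Rightarrow> 'o \<Rightarrow> 'm set" where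
  "hom C X Y = {f \<in> Ar C. dom C f = X \<and> cod C f = Y}"

definition prodmap :: "('o, 'm, 'z) sccc_scheme \<Rightarrow> 'm \<Rightarrow> 'm \<Rightarrow> 'm" where
  "prodmap C f g = tup C (comp C f (pr1 C (dom C f) (dom C g))) (comp C g (pr2 C (dom C f) (dom C g)))"

definition assoc :: "('o, 'm, 'z) sccc_scheme \<Rightarrow> 'o \<Rightarrow> 'o \<Rightarrow> 'o \<Rightarrow> 'm" where
  "assoc C X Y Z = tup C (comp C (pr1 C X Y) (pr1 C (prd C X Y) Z))
      (tup C (comp C (pr2 C X Y) (pr1 C (prd C X Y) Z)) (pr2 C (prd C X Y) Z))"

definition is_category :: "('o, 'm, 'z) sccc_scheme \<Rightarrow> bool" where
  "is_category C \<longleftrightarrow>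
     (\<forall>f \<in> Ar C. dom C f \<in> Obj C \<and> cod C f \<in> Obj C)
   \<and> (\<forall>X \<in> Obj C. idm C X \<in> hom C X X)
   \<and> (\<forall>f \<in> Ar C. \<forall>g \<in> Ar C. cod C f = dom C g \<longrightarrow> comp C g f \<in> hom C (dom C f) (cod C g))
   \<and> (\<forall>f \<in> Ar C. comp C (idm C (cod C f)) f = f \<and> comp C f (idm C (dom C f)) = f)
   \<and> (\<forall>f \<in> Ar C. \<forall>g \<in> Ar C. \<forall>h \<in> Ar C. cod C f = dom C g \<longrightarrow> cod C g = dom C h \<longrightarrow>
        comp C h (comp C g f) = comp C (comp C h g) f)"

definition is_terminal :: "('o, 'm, 'z) sccc_scheme \<Rightarrow> bool" where
  "is_terminal C \<longleftrightarrow> trm C \<in> Obj C \<and>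
     (\<forall>X \<in> Obj C. bang C X \<in> hom C X (trm C) \<and> (\<forall>f \<in> hom C X (trm C). f = bang C X))"

definition has_products :: "('o, 'm, 'z) sccc_scheme \<Rightarrow> bool" where
  "has_products C \<longleftrightarrow> (\<forall>X \<in> Obj C. \<forall>Y \<in> Obj C.
     prd C X Y \<in> Obj C \<and> pr1 C X Y \<in> hom C (prd C X Y) X \<and> pr2 C X Y \<in> hom C (prd C X Y) Y \<and>
     (\<forall>Z \<in> Obj C. \<forall>f \<in> hom C Z X. \<forall>g \<in> hom C Z Y.
        tup C f g \<in> hom C Z (prd C X Y) \<and>
        comp C (pr1 C X Y) (tup C f g) = f \<and> comp C (pr2 C X Y) (tup C f g) = g \<and>
        (\<forall>h \<in> hom C Z (prd C X Y). comp C (pr1 C X Y) h = f \<and> comp C (pr2 C X Y) h = g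
            \<longrightarrow> h = tup C f g)))"

definition has_exponentials :: "('o, 'm, 'z) sccc_scheme \<Rightarrow> bool" where
  "has_exponentials C \<longleftrightarrow> (\<forall>X \<in> Obj C. \<forall>Y \<in> Obj C.
     ex C X Y \<in> Obj C \<and> ev C X Y \<in> hom C (prd C (ex C X Y) X) Y \<and>
     (\<forall>Z \<in> Obj C. \<forall>f \<in> hom C (prd C Z X) Y.
        cur C Z X Y f \<in> hom C Z (ex C X Y) \<and>
        comp C (ev C X Y) (prodmap C (cur C Z X Y f) (idm C X)) = f \<and>
        (\<forall>h \<in> hom C Z (ex C X Y). comp C (ev C X Y) (prodmap C h (idm C X)) = f
            \<longrightarrow> h = cur C Z X Y f)))"

definition is_endofunctor :: "('o, 'm, 'z) sccc_scheme \<Rightarrow> bool" where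
  "is_endofunctor C \<longleftrightarrow>
     (\<forall>X \<in> Obj C. DO C X \<in> Obj C \<and> DA C (idm C X) = idm C (DO C X))
   \<and> (\<forall>f \<in> Ar C. DA C f \<in> hom C (DO C (dom C f)) (DO C (cod C f)))
   \<and> (\<forall>f \<in> Ar C. \<forall>g \<in> Ar C. cod C f = dom C g \<longrightarrow>
        DA C (comp C g f) = comp C (DA C g) (DA C f))"

definition is_strength :: "('o, 'm, 'z) sccc_scheme \<Rightarrow> bool" where
  "is_strength C \<longleftrightarrow>
     (\<forall>X \<in> Obj C. \<forall>Y \<in> Obj C. st C X Y \<in> hom C (prd C X (DO C Y)) (DO C (prd C X Y)))
   \<and> (\<forall>f \<in> Ar C. \<forall>g \<in> Ar C.
        comp C (st C (cod C f) (cod C g)) (prodmap C f (DA C g))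
        = comp C (DA C (prodmap C f g)) (st C (dom C f) (dom C g)))
   \<and> (\<forall>X \<in> Obj C. comp C (DA C (pr2 C (trm C) X)) (st C (trm C) X) = pr2 C (trm C) (DO C X))
   \<and> (\<forall>X \<in> Obj C. \<forall>Y \<in> Obj C. \<forall>Z \<in> Obj C.
        comp C (DA C (assoc C X Y Z)) (st C (prd C X Y) Z)
        = comp C (st C X (prd C Y Z))
            (comp C (prodmap C (idm C X) (st C Y Z)) (assoc C X Y (DO C Z))))"

definition is_model :: "('o, 'm, 'z) sccc_scheme \<Rightarrow> 'o \<Rightarrow> bool" where
  "is_model C b \<longleftrightarrow> is_category C \<and> is_terminal C \<and> has_products C \<and> has_exponentials C
     \<and> is_endofunctor C \<and> is_strength C \<and> b \<in> Obj C"

primrec ity :: "('o, 'm, 'z) sccc_scheme \<Rightarrow> 'o \<Rightarrow> ty \<Rightarrow> 'o" where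
  "ity C b Base = b"
| "ity C b One = trm C"
| "ity C b (Prod A B) = prd C (ity C b A) (ity C b B)"
| "ity C b (Arr A B) = ex C (ity C b A) (ity C b B)"
| "ity C b (Dia A) = DO C (ity C b A)"

primrec ictx :: "('o, 'm, 'z) sccc_scheme \<Rightarrow> 'o \<Rightarrow> ty list \<Rightarrow> 'o" where
  "ictx C b [] = trm C"
| "ictx C b (A # \<Gamma>) = prd C (ictx C b \<Gamma>) (ity C b A)"

text \<open>Type inference for (well-typed) terms; the value on ill-typed terms is irrelevant.\<close>
fun tyof :: "ty list \<Rightarrow> tm \<Rightarrow> ty" where
  "tyof \<Gamma> (Var i) = \<Gamma> ! i"
| "tyof \<Gamma> Unit = One"
| "tyof \<Gamma> (Pair t u) = Prod (tyof \<Gamma> t) (tyof \<Gamma> u)"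
| "tyof \<Gamma> (Fst t) = (case tyof \<Gamma> t of Prod A B \<Rightarrow> A | _ \<Rightarrow> One)"
| "tyof \<Gamma> (Snd t) = (case tyof \<Gamma> t of Prod A B \<Rightarrow> B | _ \<Rightarrow> One)"
| "tyof \<Gamma> (Lam A t) = Arr A (tyof (A # \<Gamma>) t)"
| "tyof \<Gamma> (App t u) = (case tyof \<Gamma> t of Arr A B \<Rightarrow> B | _ \<Rightarrow> One)"
| "tyof \<Gamma> (Letmap t u) = (case tyof \<Gamma> t of Dia A \<Rightarrow> Dia (tyof (A # \<Gamma>) u) | _ \<Rightarrow> One)"

fun ivar :: "('o, 'm, 'z) sccc_scheme \<Rightarrow> 'o \<Rightarrow> ty list \<Rightarrow> nat \<Rightarrow> 'm" where
  "ivar C b [] i = undefined"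
| "ivar C b (A # \<Gamma>) 0 = pr2 C (ictx C b \<Gamma>) (ity C b A)"
| "ivar C b (A # \<Gamma>) (Suc i) = comp C (ivar C b \<Gamma> i) (pr1 C (ictx C b \<Gamma>) (ity C b A))"

fun sem :: "('o, 'm, 'z) sccc_scheme \<Rightarrow> 'o \<Rightarrow> ty list \<Rightarrow> tm \<Rightarrow> 'm" where
  "sem C b \<Gamma> (Var i) = ivar C b \<Gamma> i"
| "sem C b \<Gamma> Unit = bang C (ictx C b \<Gamma>)"
| "sem C b \<Gamma> (Pair t u) = tup C (sem C b \<Gamma> t) (sem C b \<Gamma> u)"
| "sem C b \<Gamma> (Fst t) = (case tyof \<Gamma> t of
      Prod A B \<Rightarrow> comp C (pr1 C (ity C b A) (ity C b B)) (sem C b \<Gamma> t) | _ \<Rightarrow> undefined)"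
| "sem C b \<Gamma> (Snd t) = (case tyof \<Gamma> t of
      Prod A B \<Rightarrow> comp C (pr2 C (ity C b A) (ity C b B)) (sem C b \<Gamma> t) | _ \<Rightarrow> undefined)"
| "sem C b \<Gamma> (Lam A t) =
      cur C (ictx C b \<Gamma>) (ity C b A) (ity C b (tyof (A # \<Gamma>) t)) (sem C b (A # \<Gamma>) t)"
| "sem C b \<Gamma> (App t u) = (case tyof \<Gamma> t of
      Arr A B \<Rightarrow> comp C (ev C (ity C b A) (ity C b B)) (tup C (sem C b \<Gamma> t) (sem C b \<Gamma> u))
    | _ \<Rightarrow> undefined)"
| "sem C b \<Gamma> (Letmap t u) = (case tyof \<Gamma> t of
      Dia A \<Rightarrow> comp C (DA C (sem C b (A # \<Gamma>) u))
                 (comp C (st C (ictx C b \<Gamma>) (ity C b A))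
                    (tup C (idm C (ictx C b \<Gamma>)) (sem C b \<Gamma> t)))
    | _ \<Rightarrow> undefined)"

end

theory Submission
  imports Defs "HOL-Library.Countable"
begin

lemma subst_Var: "subst (Var i) k s = (if k < i then Var (i - 1) else if i = k then s else Var i)"
  by simp

lemma lift_lift:
    "i < k + 1 \<Longrightarrow> lift (lift t i) (Suc k) = lift (lift t k) i"
  by (induct t arbitrary: i k) auto

lemma lift_subst:
    "j < i + 1 \<Longrightarrow> lift (subst t j s) i = subst (lift t (i + 1)) j (lift s i)"
  by (induct t arbitrary: i j s) (auto simp: lift_lift split: nat.split)

lemma lift_subst_lt:
    "i < j + 1 \<Longrightarrow> lift (subst t j s) i = subst (lift t i) (j + 1) (lift s i)"
  by (induct t arbitrary: i j s) (auto simp: lift_lift)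

lemma subst_lift [simp]:
    "subst (lift t k) k s = t"
  by (induct t arbitrary: k s) simp_all

lemma subst_subst:
    "i < j + 1 \<Longrightarrow> subst (subst t (Suc j) (lift v i)) i (subst u j v) = subst (subst t i u) j v"
  by (induct t arbitrary: i j u v)
    (simp_all add: diff_Suc lift_lift [symmetric] lift_subst_lt
      split: nat.split)

definition ins :: "nat \<Rightarrow> ty \<Rightarrow> ty list \<Rightarrow> ty list" where
  "ins k B \<Gamma> = take k \<Gamma> @ B # drop k \<Gamma>"

lemma ins_0[simp]: "ins 0 B \<Gamma> = B # \<Gamma>" by (simp add: ins_def)
lemma ins_Suc[simp]: "ins (Suc k) B (A # \<Gamma>) = A # ins k B \<Gamma>" by (simp add: ins_def)
lemma length_ins[simp]: "k \<le> length \<Gamma> \<Longrightarrow> length (ins k B \<Gamma>) = Suc (length \<Gamma>)"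
  by (simp add: ins_def)
lemma nth_ins_lt: "i < k \<Longrightarrow> k \<le> length \<Gamma> \<Longrightarrow> ins k B \<Gamma> ! i = \<Gamma> ! i"
  by (simp add: ins_def nth_append)
lemma nth_ins_eq: "k \<le> length \<Gamma> \<Longrightarrow> ins k B \<Gamma> ! k = B"
  by (simp add: ins_def nth_append)
lemma nth_ins_gt: "k \<le> i \<Longrightarrow> k \<le> length \<Gamma> \<Longrightarrow> ins k B \<Gamma> ! Suc i = \<Gamma> ! i"
  by (simp add: ins_def nth_append min_def Suc_diff_le)

lemma typing_lift:
  "typing \<Gamma> t A \<Longrightarrow> k \<le> length \<Gamma> \<Longrightarrow> typing (ins k B \<Gamma>) (lift t k) A"
proof (induction \<Gamma> t A arbitrary: k rule: typing.induct)
  case (T_Var i \<Gamma>)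
  then show ?case
  proof (cases "i < k")
    case True
    then show ?thesis using T_Var typing.T_Var[of i "ins k B \<Gamma>"] by (simp add: nth_ins_lt)
  next
    case False
    then show ?thesis using T_Var typing.T_Var[of "Suc i" "ins k B \<Gamma>"] by (simp add: nth_ins_gt)
  qed
next
  case (T_Lam A \<Gamma> t B')
  then show ?case using typing.T_Lam[of A "ins k B \<Gamma>"] T_Lam.IH[of "Suc k"] by simp
next
  case (T_Letmap \<Gamma> t A u B')
  have 1: "typing (ins k B \<Gamma>) (lift t k) (Dia A)" using T_Letmap by simp
  have 2: "typing (A # ins k B \<Gamma>) (lift u (Suc k)) B'" using T_Letmap.IH(2)[of "Suc k"] T_Letmap.prems by simp
  show ?case using typing.T_Letmap[OF 1 2] by simp
next
  case (T_App \<Gamma> t A B' u) then show ?case by (simp; metis typing.T_App)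
next
  case (T_Fst \<Gamma> t A B') then show ?case by (simp; metis typing.T_Fst)
next
  case (T_Snd \<Gamma> t A B') then show ?case by (simp; metis typing.T_Snd)
qed (simp_all add: typing.T_Unit typing.T_Pair)

lemma typing_subst:
  "typing \<Delta> t A \<Longrightarrow> \<Delta> = ins k B \<Gamma> \<Longrightarrow> typing \<Gamma> s B \<Longrightarrow> k \<le> length \<Gamma> \<Longrightarrow> typing \<Gamma> (subst t k s) A"
proof (induction \<Delta> t A arbitrary: \<Gamma> k s rule: typing.induct)
  case (T_Var i \<Delta>)
  consider "i < k" | "i = k" | "k < i" by linarith
  then show ?case
  proof cases
    case 1 then show ?thesis using T_Var typing.T_Var[of i \<Gamma>] by (simp add: nth_ins_lt)
  next
    case 2 then show ?thesis using T_Var by (simp add: nth_ins_eq)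
  next
    case 3 then show ?thesis using T_Var typing.T_Var[of "i - 1" \<Gamma>] nth_ins_gt[of k "i - 1" \<Gamma> B]
      by simp
  qed
next
  case (T_Lam A \<Delta> t B')
  have s: "typing (A # \<Gamma>) (lift s 0) B" using typing_lift[of \<Gamma> s B 0 A] T_Lam by simp
  have "typing (A # \<Gamma>) (subst t (Suc k) (lift s 0)) B'"
    using T_Lam.IH[where \<Gamma>="A # \<Gamma>" and k="Suc k" and s="lift s 0"] T_Lam.prems s by simp
  then show ?case by (simp add: typing.T_Lam)
next
  case (T_Letmap \<Delta> t A u B')
  have s: "typing (A # \<Gamma>) (lift s 0) B" using typing_lift[of \<Gamma> s B 0 A] T_Letmap by simp
  have 2: "typing (A # \<Gamma>) (subst u (Suc k) (lift s 0)) B'"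
    using T_Letmap.IH(2)[where \<Gamma>="A # \<Gamma>" and k="Suc k" and s="lift s 0"] T_Letmap.prems s by simp
  have 1: "typing \<Gamma> (subst t k s) (Dia A)" using T_Letmap by simp
  show ?case using typing.T_Letmap[OF 1 2] by simp
next
  case (T_App \<Delta> t A B' u)
  then show ?case by (metis subst.simps(7) typing.T_App)
next
  case (T_Fst \<Delta> t A B') then show ?case by (simp; metis typing.T_Fst)
next
  case (T_Snd \<Delta> t A B') then show ?case by (simp; metis typing.T_Snd)
qed (simp_all add: typing.T_Unit typing.T_Pair)

lemma typing_subst0: "typing (B # \<Gamma>) t A \<Longrightarrow> typing \<Gamma> s B \<Longrightarrow> typing \<Gamma> (subst t 0 s) A"
  by (erule typing_subst[where k=0 and B=B]) simp_all

lemma typing_lift0: "typing \<Gamma> t A \<Longrightarrow> typing (B # \<Gamma>) (lift t 0) A"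
  using typing_lift[where k=0 and B=B] by fastforce

lemma typing_append: "typing \<Gamma> t A \<Longrightarrow> typing (\<Gamma> @ \<Delta>) t A"
proof (induction \<Gamma> t A rule: typing.induct)
  case (T_Var i \<Gamma>)
  then show ?case using typing.T_Var[of i "\<Gamma> @ \<Delta>"] by (simp add: nth_append)
next
  case (T_App \<Gamma> t A B' u) then show ?case by (metis typing.T_App)
next
  case (T_Fst \<Gamma> t A B') then show ?case by (metis typing.T_Fst)
next
  case (T_Snd \<Gamma> t A B') then show ?case by (metis typing.T_Snd)
qed (simp_all add: typing.T_Unit typing.T_Pair typing.T_Lam typing.T_Letmap)

lemma tyof_typing: "typing \<Gamma> t A \<Longrightarrow> tyof \<Gamma> t = A"
  by (induction \<Gamma> t A rule: typing.induct) auto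

fun check :: "ty list \<Rightarrow> tm \<Rightarrow> ty option" where
  "check \<Gamma> (Var i) = (if i < length \<Gamma> then Some (\<Gamma> ! i) else None)"
| "check \<Gamma> Unit = Some One"
| "check \<Gamma> (Pair t u) = (case check \<Gamma> t of Some A \<Rightarrow> (case check \<Gamma> u of Some B \<Rightarrow> Some (Prod A B) | None \<Rightarrow> None) | None \<Rightarrow> None)"
| "check \<Gamma> (Fst t) = (case check \<Gamma> t of Some (Prod A B) \<Rightarrow> Some A | _ \<Rightarrow> None)"
| "check \<Gamma> (Snd t) = (case check \<Gamma> t of Some (Prod A B) \<Rightarrow> Some B | _ \<Rightarrow> None)"
| "check \<Gamma> (Lam A t) = (case check (A # \<Gamma>) t of Some B \<Rightarrow> Some (Arr A B) | None \<Rightarrow> None)"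
| "check \<Gamma> (App t u) = (case check \<Gamma> t of Some (Arr A B) \<Rightarrow> (case check \<Gamma> u of Some A' \<Rightarrow> (if A = A' then Some B else None) | None \<Rightarrow> None) | _ \<Rightarrow> None)"
| "check \<Gamma> (Letmap t u) = (case check \<Gamma> t of Some (Dia A) \<Rightarrow> (case check (A # \<Gamma>) u of Some B \<Rightarrow> Some (Dia B) | None \<Rightarrow> None) | _ \<Rightarrow> None)"

lemma typing_check: "typing \<Gamma> t A \<Longrightarrow> check \<Gamma> t = Some A"
  by (induction \<Gamma> t A rule: typing.induct) auto

lemma check_typing: "check \<Gamma> t = Some A \<Longrightarrow> typing \<Gamma> t A"
proof (induction t arbitrary: \<Gamma> A)
  case (Var x)
  then show ?case by (auto split: if_splits intro: typing.intros)
next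
  case (Pair t1 t2)
  then obtain A1 A2 where "check \<Gamma> t1 = Some A1" "check \<Gamma> t2 = Some A2" "A = Prod A1 A2"
    by (auto split: option.splits)
  then show ?case using Pair.IH by (metis typing.T_Pair)
next
  case (Fst t)
  then obtain A1 A2 where "check \<Gamma> t = Some (Prod A1 A2)" "A = A1"
    by (auto split: option.splits ty.splits)
  then show ?case using Fst.IH by (metis typing.T_Fst)
next
  case (Snd t)
  then obtain A1 A2 where "check \<Gamma> t = Some (Prod A1 A2)" "A = A2"
    by (auto split: option.splits ty.splits)
  then show ?case using Snd.IH by (metis typing.T_Snd)
next
  case (Lam A1 t)
  then obtain B where "check (A1 # \<Gamma>) t = Some B" "A = Arr A1 B"
    by (auto split: option.splits)
  then show ?case using Lam.IH by (metis typing.T_Lam)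
next
  case (App t1 t2)
  then obtain A1 B1 where "check \<Gamma> t1 = Some (Arr A1 B1)" "check \<Gamma> t2 = Some A1" "A = B1"
    by (auto split: option.splits ty.splits if_splits)
  then show ?case using App.IH by (metis typing.T_App)
next
  case (Letmap t1 t2)
  then obtain A1 B where "check \<Gamma> t1 = Some (Dia A1)" "check (A1 # \<Gamma>) t2 = Some B" "A = Dia B"
    by (auto split: option.splits ty.splits)
  then show ?case using Letmap.IH by (metis typing.T_Letmap)
qed (auto intro: typing.intros)

lemma typing_iff: "typing \<Gamma> t A \<longleftrightarrow> check \<Gamma> t = Some A"
  using typing_check check_typing by blast

primrec cl :: "nat \<Rightarrow> tm \<Rightarrow> bool" where
  "cl n (Var i) = (i < n)"
| "cl n Unit = True"
| "cl n (Pair t u) = (cl n t \<and> cl n u)"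
| "cl n (Fst t) = cl n t"
| "cl n (Snd t) = cl n t"
| "cl n (Lam A t) = cl (Suc n) t"
| "cl n (App t u) = (cl n t \<and> cl n u)"
| "cl n (Letmap t u) = (cl n t \<and> cl (Suc n) u)"

lemma typing_cl: "typing \<Gamma> t A \<Longrightarrow> cl (length \<Gamma>) t"
  by (induction \<Gamma> t A rule: typing.induct) auto

lemma cl_lift: "cl n t \<Longrightarrow> n \<le> k \<Longrightarrow> lift t k = t"
  by (induction t arbitrary: n k) auto

lemma cl_subst: "cl n t \<Longrightarrow> n \<le> k \<Longrightarrow> subst t k s = t"
  by (induction t arbitrary: n k s) auto

lemma cl_subst_Var: "cl (Suc k) t \<Longrightarrow> subst t k (Var k) = t"
  by (induction t arbitrary: k) auto

lemma cl_subst_Var_Suc: "cl (Suc k) t \<Longrightarrow> subst t k (Var (Suc k)) = lift t k"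
  by (induction t arbitrary: k) auto

lemma cl1_subst_subst: "cl 1 t \<Longrightarrow> subst (subst t 0 u) k s = subst t 0 (subst u k s)"
  using subst_subst[of 0 k t s u] cl_subst[of 1 t "Suc k" "lift s 0"] by simp

lemma cl1_lift_subst: "cl 1 t \<Longrightarrow> lift (subst t 0 s) k = subst t 0 (lift s k)"
  using lift_subst[of 0 k t s] cl_lift[of 1 t "Suc k"] by simp


lemma eqv_typing: "eqv \<Gamma> t u A \<Longrightarrow> typing \<Gamma> t A \<and> typing \<Gamma> u A"
proof (induction rule: eqv.induct)
  case (E_refl \<Gamma> t A) then show ?case by simp
next
  case (E_sym \<Gamma> t u A) then show ?case by simp
next
  case (E_trans \<Gamma> t u A v) then show ?case by simp
next
  case (C_Pair \<Gamma> t t' A u u' B) then show ?case by (simp add: typing.T_Pair)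
next
  case (C_Fst \<Gamma> t t' A B) then show ?case by (metis typing.T_Fst)
next
  case (C_Snd \<Gamma> t t' A B) then show ?case by (metis typing.T_Snd)
next
  case (C_Lam A \<Gamma> t t' B) then show ?case by (simp add: typing.T_Lam)
next
  case (C_App \<Gamma> t t' A B u u') then show ?case by (metis typing.T_App)
next
  case (C_Letmap \<Gamma> t t' A u u' B) then show ?case by (metis typing.T_Letmap)
next
  case (unit_eta \<Gamma> t) then show ?case by (simp add: typing.T_Unit)
next
  case (pair_eta \<Gamma> t A B) then show ?case by (metis typing.T_Pair typing.T_Fst typing.T_Snd)
next
  case (fst_beta \<Gamma> t A u B) then show ?case by (metis typing.T_Pair typing.T_Fst)
next
  case (snd_beta \<Gamma> t A u B) then show ?case by (metis typing.T_Pair typing.T_Snd)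
next
  case (fun_eta \<Gamma> t A B)
  have "typing (A # \<Gamma>) (App (lift t 0) (Var 0)) B"
    using typing_lift0[OF fun_eta] typing.T_Var[of 0 "A # \<Gamma>"] typing.T_App by fastforce
  then show ?case using fun_eta typing.T_Lam by blast
next
  case (fun_beta A \<Gamma> t B u) then show ?case by (metis typing.T_App typing.T_Lam typing_subst0)
next
  case (letmap_eta \<Gamma> t A)
  have "typing (A # \<Gamma>) (Var 0) A" using typing.T_Var[of 0 "A # \<Gamma>"] by simp
  then show ?case using letmap_eta typing.T_Letmap by blast
next
  case (letmap_beta \<Gamma> t A u B u' C)
  have 1: "typing (B # A # \<Gamma>) (lift u' 1) C" using typing_lift[OF letmap_beta(3), of 1 A] by simp
  have "typing (A # \<Gamma>) (subst (lift u' 1) 0 u) C" using typing_subst0[OF 1 letmap_beta(2)] .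
  then show ?case using letmap_beta by (metis typing.T_Letmap)
qed

lemma eqv_typing1: "eqv \<Gamma> t u A \<Longrightarrow> typing \<Gamma> t A" using eqv_typing by blast
lemma eqv_typing2: "eqv \<Gamma> t u A \<Longrightarrow> typing \<Gamma> u A" using eqv_typing by blast

lemma eqv_lift: "eqv \<Gamma> t u A \<Longrightarrow> k \<le> length \<Gamma> \<Longrightarrow> eqv (ins k B \<Gamma>) (lift t k) (lift u k) A"
proof (induction arbitrary: k rule: eqv.induct)
  case (E_refl \<Gamma> t A) then show ?case by (simp add: typing_lift eqv.E_refl)
next
  case (E_sym \<Gamma> t u A) then show ?case by (simp add: eqv.E_sym)
next
  case (E_trans \<Gamma> t u A v) then show ?case using eqv.E_trans by blast
next
  case (C_Pair \<Gamma> t t' A u u' B) then show ?case by (simp add: eqv.C_Pair)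
next
  case (C_Fst \<Gamma> t t' A B) then show ?case by (metis eqv.C_Fst lift.simps(4))
next
  case (C_Snd \<Gamma> t t' A B) then show ?case by (metis eqv.C_Snd lift.simps(5))
next
  case (C_Lam A \<Gamma> t t' B')
  then show ?case using C_Lam.IH[of "Suc k"] by (simp add: eqv.C_Lam)
next
  case (C_App \<Gamma> t t' A B u u') then show ?case by (metis eqv.C_App lift.simps(7))
next
  case (C_Letmap \<Gamma> t t' A u u' B')
  have 1: "eqv (ins k B \<Gamma>) (lift t k) (lift t' k) (Dia A)" using C_Letmap by simp
  have 2: "eqv (A # ins k B \<Gamma>) (lift u (Suc k)) (lift u' (Suc k)) B'"
    using C_Letmap.IH(2)[of "Suc k"] C_Letmap.prems by simp
  show ?case using eqv.C_Letmap[OF 1 2] by simp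
next
  case (unit_eta \<Gamma> t) then show ?case using eqv.unit_eta[OF typing_lift[OF unit_eta]] by simp
next
  case (pair_eta \<Gamma> t A B') then show ?case using eqv.pair_eta[OF typing_lift[OF pair_eta]] by simp
next
  case (fst_beta \<Gamma> t A u B')
  then show ?case using eqv.fst_beta[OF typing_lift[OF fst_beta(1) fst_beta(3)] typing_lift[OF fst_beta(2) fst_beta(3)]] by simp
next
  case (snd_beta \<Gamma> t A u B')
  then show ?case using eqv.snd_beta[OF typing_lift[OF snd_beta(1) snd_beta(3)] typing_lift[OF snd_beta(2) snd_beta(3)]] by simp
next
  case (fun_eta \<Gamma> t A B')
  have "lift (lift t 0) (Suc k) = lift (lift t k) 0" using lift_lift[of 0 k t] by simp
  then show ?case using eqv.fun_eta[OF typing_lift[OF fun_eta(1) fun_eta(2)]] by simp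
next
  case (fun_beta A \<Gamma> t B' u)
  have t: "typing (A # ins k B \<Gamma>) (lift t (Suc k)) B'" using typing_lift[OF fun_beta(1), of "Suc k" B] fun_beta by simp
  have u: "typing (ins k B \<Gamma>) (lift u k) A" using typing_lift[OF fun_beta(2) fun_beta(3)] .
  have "lift (subst t 0 u) k = subst (lift t (Suc k)) 0 (lift u k)" using lift_subst[of 0 k t u] by simp
  then show ?case using eqv.fun_beta[OF t u] by simp
next
  case (letmap_eta \<Gamma> t A) then show ?case using eqv.letmap_eta[OF typing_lift[OF letmap_eta]] by simp
next
  case (letmap_beta \<Gamma> t A u B' u' C)
  have t: "typing (ins k B \<Gamma>) (lift t k) (Dia A)" using typing_lift[OF letmap_beta(1) letmap_beta(4)] .
  have u: "typing (A # ins k B \<Gamma>) (lift u (Suc k)) B'" using typing_lift[OF letmap_beta(2), of "Suc k" B] letmap_beta by simp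
  have u': "typing (B' # ins k B \<Gamma>) (lift u' (Suc k)) C" using typing_lift[OF letmap_beta(3), of "Suc k" B] letmap_beta by simp
  have e1: "lift (lift u' 1) (Suc (Suc k)) = lift (lift u' (Suc k)) 1" using lift_lift[of 1 "Suc k" u'] by simp
  have "lift (subst (lift u' 1) 0 u) (Suc k) = subst (lift (lift u' 1) (Suc (Suc k))) 0 (lift u (Suc k))"
    using lift_subst[of 0 "Suc k" "lift u' 1" u] by simp
  then show ?case using eqv.letmap_beta[OF t u u'] e1 by simp
qed

lemma eqv_lift0: "eqv \<Gamma> t u A \<Longrightarrow> eqv (B # \<Gamma>) (lift t 0) (lift u 0) A"
  using eqv_lift[where k=0 and B=B] by fastforce

lemma eqv_subst:
  "eqv \<Delta> t u A \<Longrightarrow> \<Delta> = ins k B \<Gamma> \<Longrightarrow> typing \<Gamma> s B \<Longrightarrow> k \<le> length \<Gamma>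
   \<Longrightarrow> eqv \<Gamma> (subst t k s) (subst u k s) A"
proof (induction arbitrary: \<Gamma> k s rule: eqv.induct)
  case (E_refl \<Delta> t A) then show ?case by (metis typing_subst eqv.E_refl)
next
  case (E_sym \<Delta> t u A) then show ?case by (simp add: eqv.E_sym)
next
  case (E_trans \<Delta> t u A v)
  then show ?case using E_trans.IH(1)[where \<Gamma>=\<Gamma> and k=k and s=s] E_trans.IH(2)[where \<Gamma>=\<Gamma> and k=k and s=s]
    by (meson eqv.E_trans)
next
  case (C_Pair \<Delta> t t' A u u' B) then show ?case by (simp add: eqv.C_Pair)
next
  case (C_Fst \<Delta> t t' A B) then show ?case by (metis eqv.C_Fst subst.simps(4))
next
  case (C_Snd \<Delta> t t' A B) then show ?case by (metis eqv.C_Snd subst.simps(5))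
next
  case (C_Lam A \<Delta> t t' B')
  have s: "typing (A # \<Gamma>) (lift s 0) B" using typing_lift0[OF C_Lam(4)] .
  show ?case using C_Lam.IH[where \<Gamma>="A # \<Gamma>" and k="Suc k" and s="lift s 0"] C_Lam.prems s
    by (simp add: eqv.C_Lam)
next
  case (C_App \<Delta> t t' A B u u') then show ?case by (metis eqv.C_App subst.simps(7))
next
  case (C_Letmap \<Delta> t t' A u u' B')
  have s: "typing (A # \<Gamma>) (lift s 0) B" using typing_lift0[OF C_Letmap(6)] .
  have 2: "eqv (A # \<Gamma>) (subst u (Suc k) (lift s 0)) (subst u' (Suc k) (lift s 0)) B'"
    using C_Letmap.IH(2)[where \<Gamma>="A # \<Gamma>" and k="Suc k" and s="lift s 0"] C_Letmap.prems s by simp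
  have 1: "eqv \<Gamma> (subst t k s) (subst t' k s) (Dia A)"
    using C_Letmap.IH(1)[where \<Gamma>=\<Gamma> and k=k and s=s] C_Letmap.prems by simp
  show ?case using eqv.C_Letmap[OF 1 2] by simp
next
  case (unit_eta \<Delta> t) then show ?case using eqv.unit_eta[OF typing_subst[OF unit_eta]] by simp
next
  case (pair_eta \<Delta> t A B') then show ?case using eqv.pair_eta[OF typing_subst[OF pair_eta]] by simp
next
  case (fst_beta \<Delta> t A u B')
  then show ?case using eqv.fst_beta[OF typing_subst[OF fst_beta(1) fst_beta(3-5)] typing_subst[OF fst_beta(2) fst_beta(3-5)]] by simp
next
  case (snd_beta \<Delta> t A u B')
  then show ?case using eqv.snd_beta[OF typing_subst[OF snd_beta(1) snd_beta(3-5)] typing_subst[OF snd_beta(2) snd_beta(3-5)]] by simp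
next
  case (fun_eta \<Delta> t A B')
  have t: "typing \<Gamma> (subst t k s) (Arr A B')" using typing_subst[OF fun_eta] .
  have "subst (lift t 0) (Suc k) (lift s 0) = lift (subst t k s) 0" using lift_subst_lt[of 0 k t s] by simp
  then show ?case using eqv.fun_eta[OF t] by simp
next
  case (fun_beta A \<Delta> t B' u)
  have s: "typing (A # \<Gamma>) (lift s 0) B" using typing_lift0[OF fun_beta(4)] .
  have t: "typing (A # \<Gamma>) (subst t (Suc k) (lift s 0)) B'"
    using typing_subst[OF fun_beta(1), of "Suc k" B "A # \<Gamma>"] fun_beta s by simp
  have u: "typing \<Gamma> (subst u k s) A" using typing_subst[OF fun_beta(2) fun_beta(3-5)] .
  have "subst (subst t 0 u) k s = subst (subst t (Suc k) (lift s 0)) 0 (subst u k s)"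
    using subst_subst[of 0 k t s u] by simp
  then show ?case using eqv.fun_beta[OF t u] by simp
next
  case (letmap_eta \<Delta> t A) then show ?case using eqv.letmap_eta[OF typing_subst[OF letmap_eta]] by simp
next
  case (letmap_beta \<Delta> t A u B' u' C)
  have s: "typing (A # \<Gamma>) (lift s 0) B" using typing_lift0[OF letmap_beta(5)] .
  have s': "typing (B' # \<Gamma>) (lift s 0) B" using typing_lift0[OF letmap_beta(5)] .
  have t: "typing \<Gamma> (subst t k s) (Dia A)" using typing_subst[OF letmap_beta(1) letmap_beta(4-6)] .
  have u: "typing (A # \<Gamma>) (subst u (Suc k) (lift s 0)) B'"
    using typing_subst[OF letmap_beta(2), of "Suc k" B "A # \<Gamma>"] letmap_beta s by simp
  have u': "typing (B' # \<Gamma>) (subst u' (Suc k) (lift s 0)) C"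
    using typing_subst[OF letmap_beta(3), of "Suc k" B "B' # \<Gamma>"] letmap_beta s' by simp
  have e0: "lift (lift s 0) 1 = lift (lift s 0) 0" using lift_lift[of 0 0 s] by simp
  have e1: "lift (subst u' (Suc k) (lift s 0)) 1 = subst (lift u' 1) (Suc (Suc k)) (lift (lift s 0) 0)"
    using lift_subst_lt[of 1 "Suc k" u' "lift s 0"] e0 by simp
  have e2: "subst (subst (lift u' 1) (Suc (Suc k)) (lift (lift s 0) 0)) 0 (subst u (Suc k) (lift s 0))
      = subst (subst (lift u' 1) 0 u) (Suc k) (lift s 0)"
    using subst_subst[of 0 "Suc k" "lift u' 1" "lift s 0" u] by simp
  show ?case using eqv.letmap_beta[OF t u u'] e1 e2 by simp
qed

lemma eqv_subst_cong:
  "typing \<Delta> t A \<Longrightarrow> \<Delta> = ins k B \<Gamma> \<Longrightarrow> eqv \<Gamma> s s' B \<Longrightarrow> k \<le> length \<Gamma>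
   \<Longrightarrow> eqv \<Gamma> (subst t k s) (subst t k s') A"
proof (induction arbitrary: \<Gamma> k s s' rule: typing.induct)
  case (T_Var i \<Delta>)
  consider "i < k" | "i = k" | "k < i" by linarith
  then show ?case
  proof cases
    case 1 then show ?thesis using T_Var typing.T_Var[of i \<Gamma>] by (simp add: nth_ins_lt eqv.E_refl)
  next
    case 2 then show ?thesis using T_Var by (simp add: nth_ins_eq)
  next
    case 3 then show ?thesis using T_Var typing.T_Var[of "i - 1" \<Gamma>] nth_ins_gt[of k "i - 1" \<Gamma> B]
      by (simp add: eqv.E_refl)
  qed
next
  case (T_Unit \<Delta>) then show ?case by (simp add: eqv.E_refl typing.T_Unit)
next
  case (T_Pair \<Delta> t A u B') then show ?case by (simp add: eqv.C_Pair)
next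
  case (T_Fst \<Delta> t A B') then show ?case by (metis eqv.C_Fst subst.simps(4))
next
  case (T_Snd \<Delta> t A B') then show ?case by (metis eqv.C_Snd subst.simps(5))
next
  case (T_Lam A \<Delta> t B')
  have s: "eqv (A # \<Gamma>) (lift s 0) (lift s' 0) B" using eqv_lift0[OF T_Lam(4)] .
  show ?case using T_Lam.IH[where \<Gamma>="A # \<Gamma>" and k="Suc k" and s="lift s 0" and s'="lift s' 0"] T_Lam.prems s
    by (simp add: eqv.C_Lam)
next
  case (T_App \<Delta> t A B' u) then show ?case by (metis eqv.C_App subst.simps(7))
next
  case (T_Letmap \<Delta> t A u B')
  have s: "eqv (A # \<Gamma>) (lift s 0) (lift s' 0) B" using eqv_lift0[OF T_Letmap(6)] .
  have 2: "eqv (A # \<Gamma>) (subst u (Suc k) (lift s 0)) (subst u (Suc k) (lift s' 0)) B'"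
    using T_Letmap.IH(2)[where \<Gamma>="A # \<Gamma>" and k="Suc k" and s="lift s 0" and s'="lift s' 0"] T_Letmap.prems s
    by simp
  have 1: "eqv \<Gamma> (subst t k s) (subst t k s') (Dia A)"
    using T_Letmap.IH(1)[where \<Gamma>=\<Gamma> and k=k and s=s and s'=s'] T_Letmap.prems by simp
  show ?case using eqv.C_Letmap[OF 1 2] by simp
qed

lemma eqv_subst0: "eqv (B # \<Gamma>) t u A \<Longrightarrow> eqv \<Gamma> s s' B \<Longrightarrow> eqv \<Gamma> (subst t 0 s) (subst u 0 s') A"
proof -
  assume a: "eqv (B # \<Gamma>) t u A" and b: "eqv \<Gamma> s s' B"
  have "eqv \<Gamma> (subst t 0 s) (subst u 0 s) A"
    using eqv_subst[OF a, where k=0 and B=B and \<Gamma>=\<Gamma> and s=s] eqv_typing1[OF b] by simp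
  moreover have "eqv \<Gamma> (subst u 0 s) (subst u 0 s') A"
    using eqv_subst_cong[OF eqv_typing2[OF a], where k=0 and B=B and \<Gamma>=\<Gamma> and s=s and s'=s'] b by simp
  ultimately show ?thesis by (rule eqv.E_trans)
qed


locale model =
  fixes C :: "('o, 'm, 'z) sccc_scheme" and b :: 'o
  assumes M: "is_model C b"
begin

lemma cat: "is_category C" and term_ax: "is_terminal C" and prods: "has_products C"
  and exps: "has_exponentials C" and fun_ax: "is_endofunctor C" and stren: "is_strength C"
  and b_obj: "b \<in> Obj C"
  using M unfolding is_model_def by auto

lemma dom_obj[simp]: "f \<in> Ar C \<Longrightarrow> dom C f \<in> Obj C"
  and cod_obj[simp]: "f \<in> Ar C \<Longrightarrow> cod C f \<in> Obj C"
  using cat unfolding is_category_def by auto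

lemma id_ar[simp]: "X \<in> Obj C \<Longrightarrow> idm C X \<in> Ar C"
  and id_dom[simp]: "X \<in> Obj C \<Longrightarrow> dom C (idm C X) = X"
  and id_cod[simp]: "X \<in> Obj C \<Longrightarrow> cod C (idm C X) = X"
  using cat unfolding is_category_def hom_def by auto

lemma comp_ar[simp]: "f \<in> Ar C \<Longrightarrow> g \<in> Ar C \<Longrightarrow> cod C f = dom C g \<Longrightarrow> comp C g f \<in> Ar C"
  and comp_dom[simp]: "f \<in> Ar C \<Longrightarrow> g \<in> Ar C \<Longrightarrow> cod C f = dom C g \<Longrightarrow> dom C (comp C g f) = dom C f"
  and comp_cod[simp]: "f \<in> Ar C \<Longrightarrow> g \<in> Ar C \<Longrightarrow> cod C f = dom C g \<Longrightarrow> cod C (comp C g f) = cod C g"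
  using cat unfolding is_category_def hom_def by auto

lemma id_l[simp]: "f \<in> Ar C \<Longrightarrow> cod C f = Y \<Longrightarrow> comp C (idm C Y) f = f"
  and id_r[simp]: "f \<in> Ar C \<Longrightarrow> dom C f = X \<Longrightarrow> comp C f (idm C X) = f"
  using cat unfolding is_category_def by auto

lemma comp_assoc[simp]: "f \<in> Ar C \<Longrightarrow> g \<in> Ar C \<Longrightarrow> h \<in> Ar C \<Longrightarrow> cod C f = dom C g \<Longrightarrow> cod C g = dom C h \<Longrightarrow>
   comp C (comp C h g) f = comp C h (comp C g f)"
  using cat unfolding is_category_def by auto

lemma trm_obj[simp]: "trm C \<in> Obj C"
  and bang_ar[simp]: "X \<in> Obj C \<Longrightarrow> bang C X \<in> Ar C"
  and bang_dom[simp]: "X \<in> Obj C \<Longrightarrow> dom C (bang C X) = X"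
  and bang_cod[simp]: "X \<in> Obj C \<Longrightarrow> cod C (bang C X) = trm C"
  using term_ax unfolding is_terminal_def hom_def by auto

lemma bang_uniq: "f \<in> Ar C \<Longrightarrow> cod C f = trm C \<Longrightarrow> f = bang C (dom C f)"
  using term_ax unfolding is_terminal_def hom_def by auto

lemma prd_obj[simp]: "X \<in> Obj C \<Longrightarrow> Y \<in> Obj C \<Longrightarrow> prd C X Y \<in> Obj C"
  and pr1_ar[simp]: "X \<in> Obj C \<Longrightarrow> Y \<in> Obj C \<Longrightarrow> pr1 C X Y \<in> Ar C"
  and pr1_dom[simp]: "X \<in> Obj C \<Longrightarrow> Y \<in> Obj C \<Longrightarrow> dom C (pr1 C X Y) = prd C X Y"
  and pr1_cod[simp]: "X \<in> Obj C \<Longrightarrow> Y \<in> Obj C \<Longrightarrow> cod C (pr1 C X Y) = X"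
  and pr2_ar[simp]: "X \<in> Obj C \<Longrightarrow> Y \<in> Obj C \<Longrightarrow> pr2 C X Y \<in> Ar C"
  and pr2_dom[simp]: "X \<in> Obj C \<Longrightarrow> Y \<in> Obj C \<Longrightarrow> dom C (pr2 C X Y) = prd C X Y"
  and pr2_cod[simp]: "X \<in> Obj C \<Longrightarrow> Y \<in> Obj C \<Longrightarrow> cod C (pr2 C X Y) = Y"
  using prods unfolding has_products_def hom_def by auto

lemma tup_props:
  assumes "f \<in> Ar C" "g \<in> Ar C" "dom C f = dom C g"
  shows "tup C f g \<in> Ar C \<and> dom C (tup C f g) = dom C f \<and> cod C (tup C f g) = prd C (cod C f) (cod C g)
    \<and> comp C (pr1 C (cod C f) (cod C g)) (tup C f g) = f \<and> comp C (pr2 C (cod C f) (cod C g)) (tup C f g) = g"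
proof -
  let ?X = "cod C f" and ?Y = "cod C g" and ?Z = "dom C f"
  have X: "?X \<in> Obj C" and Y: "?Y \<in> Obj C" and Z: "?Z \<in> Obj C" using assms by simp_all
  have hf: "f \<in> hom C ?Z ?X" and hg: "g \<in> hom C ?Z ?Y" using assms by (simp_all add: hom_def)
  have "\<forall>Z \<in> Obj C. \<forall>f \<in> hom C Z ?X. \<forall>g \<in> hom C Z ?Y.
        tup C f g \<in> hom C Z (prd C ?X ?Y) \<and>
        comp C (pr1 C ?X ?Y) (tup C f g) = f \<and> comp C (pr2 C ?X ?Y) (tup C f g) = g"
    using prods X Y unfolding has_products_def by blast
  then have "tup C f g \<in> hom C ?Z (prd C ?X ?Y) \<and>
        comp C (pr1 C ?X ?Y) (tup C f g) = f \<and> comp C (pr2 C ?X ?Y) (tup C f g) = g"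
    using Z hf hg by blast
  then show ?thesis by (simp add: hom_def)
qed

lemma tup_ar[simp]: "f \<in> Ar C \<Longrightarrow> g \<in> Ar C \<Longrightarrow> dom C f = dom C g \<Longrightarrow> tup C f g \<in> Ar C"
  and tup_dom[simp]: "f \<in> Ar C \<Longrightarrow> g \<in> Ar C \<Longrightarrow> dom C f = dom C g \<Longrightarrow> dom C (tup C f g) = dom C f"
  and tup_cod[simp]: "f \<in> Ar C \<Longrightarrow> g \<in> Ar C \<Longrightarrow> dom C f = dom C g \<Longrightarrow> cod C (tup C f g) = prd C (cod C f) (cod C g)"
  using tup_props by auto

lemma pr1_tup[simp]: "f \<in> Ar C \<Longrightarrow> g \<in> Ar C \<Longrightarrow> dom C f = dom C g \<Longrightarrow> cod C f = X \<Longrightarrow> cod C g = Y \<Longrightarrow>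
    comp C (pr1 C X Y) (tup C f g) = f"
  and pr2_tup[simp]: "f \<in> Ar C \<Longrightarrow> g \<in> Ar C \<Longrightarrow> dom C f = dom C g \<Longrightarrow> cod C f = X \<Longrightarrow> cod C g = Y \<Longrightarrow>
    comp C (pr2 C X Y) (tup C f g) = g"
  using tup_props by auto

lemma tup_uniq: "h \<in> Ar C \<Longrightarrow> cod C h = prd C X Y \<Longrightarrow> X \<in> Obj C \<Longrightarrow> Y \<in> Obj C \<Longrightarrow>
    h = tup C (comp C (pr1 C X Y) h) (comp C (pr2 C X Y) h)"
proof -
  assume a: "h \<in> Ar C" "cod C h = prd C X Y" "X \<in> Obj C" "Y \<in> Obj C"
  let ?Z = "dom C h"
  have "h \<in> hom C ?Z (prd C X Y)" using a by (simp add: hom_def)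
  moreover have "comp C (pr1 C X Y) h \<in> hom C ?Z X" "comp C (pr2 C X Y) h \<in> hom C ?Z Y"
    using a by (simp_all add: hom_def)
  ultimately show ?thesis using prods a(3,4) dom_obj[OF a(1)] unfolding has_products_def by blast
qed

lemma pr1_tup_assoc[simp]: "f \<in> Ar C \<Longrightarrow> g \<in> Ar C \<Longrightarrow> dom C f = dom C g \<Longrightarrow> cod C f = X \<Longrightarrow> cod C g = Y \<Longrightarrow>
    h \<in> Ar C \<Longrightarrow> cod C h = dom C f \<Longrightarrow> comp C (pr1 C X Y) (comp C (tup C f g) h) = comp C f h"
  and pr2_tup_assoc[simp]: "f \<in> Ar C \<Longrightarrow> g \<in> Ar C \<Longrightarrow> dom C f = dom C g \<Longrightarrow> cod C f = X \<Longrightarrow> cod C g = Y \<Longrightarrow>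
    h \<in> Ar C \<Longrightarrow> cod C h = dom C f \<Longrightarrow> comp C (pr2 C X Y) (comp C (tup C f g) h) = comp C g h"
  by (metis comp_assoc pr1_tup tup_ar tup_cod tup_dom pr1_ar pr1_dom cod_obj)
     (metis comp_assoc pr2_tup tup_ar tup_cod tup_dom pr2_ar pr2_dom cod_obj)

lemma tup_comp[simp]: "f \<in> Ar C \<Longrightarrow> g \<in> Ar C \<Longrightarrow> dom C f = dom C g \<Longrightarrow> h \<in> Ar C \<Longrightarrow> cod C h = dom C f \<Longrightarrow>
   comp C (tup C f g) h = tup C (comp C f h) (comp C g h)"
proof -
  assume a: "f \<in> Ar C" "g \<in> Ar C" "dom C f = dom C g" "h \<in> Ar C" "cod C h = dom C f"
  have "comp C (tup C f g) h \<in> Ar C" "cod C (comp C (tup C f g) h) = prd C (cod C f) (cod C g)"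
    using a by simp_all
  from tup_uniq[OF this] show ?thesis using a by simp
qed

lemma tup_eta[simp]: "h \<in> Ar C \<Longrightarrow> cod C h = prd C X Y \<Longrightarrow> X \<in> Obj C \<Longrightarrow> Y \<in> Obj C \<Longrightarrow>
    tup C (comp C (pr1 C X Y) h) (comp C (pr2 C X Y) h) = h"
  using tup_uniq by metis

lemma tup_pr[simp]: "X \<in> Obj C \<Longrightarrow> Y \<in> Obj C \<Longrightarrow> tup C (pr1 C X Y) (pr2 C X Y) = idm C (prd C X Y)"
  using tup_eta[of "idm C (prd C X Y)" X Y] by simp

lemma ex_obj[simp]: "X \<in> Obj C \<Longrightarrow> Y \<in> Obj C \<Longrightarrow> ex C X Y \<in> Obj C"
  and ev_ar[simp]: "X \<in> Obj C \<Longrightarrow> Y \<in> Obj C \<Longrightarrow> ev C X Y \<in> Ar C"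
  and ev_dom[simp]: "X \<in> Obj C \<Longrightarrow> Y \<in> Obj C \<Longrightarrow> dom C (ev C X Y) = prd C (ex C X Y) X"
  and ev_cod[simp]: "X \<in> Obj C \<Longrightarrow> Y \<in> Obj C \<Longrightarrow> cod C (ev C X Y) = Y"
  using exps unfolding has_exponentials_def hom_def by auto

lemma cur_props:
  assumes "f \<in> Ar C" "dom C f = prd C Z X" "cod C f = Y" "Z \<in> Obj C" "X \<in> Obj C"
  shows "cur C Z X Y f \<in> Ar C \<and> dom C (cur C Z X Y f) = Z \<and> cod C (cur C Z X Y f) = ex C X Y
     \<and> comp C (ev C X Y) (prodmap C (cur C Z X Y f) (idm C X)) = f
     \<and> (\<forall>h \<in> hom C Z (ex C X Y). comp C (ev C X Y) (prodmap C h (idm C X)) = f \<longrightarrow> h = cur C Z X Y f)"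
proof -
  have "Y \<in> Obj C" using assms cod_obj by blast
  moreover have "f \<in> hom C (prd C Z X) Y" using assms by (simp add: hom_def)
  ultimately show ?thesis using exps assms(4,5) unfolding has_exponentials_def hom_def by auto
qed

lemma cur_ar[simp]: "f \<in> Ar C \<Longrightarrow> dom C f = prd C Z X \<Longrightarrow> cod C f = Y \<Longrightarrow> Z \<in> Obj C \<Longrightarrow> X \<in> Obj C \<Longrightarrow> cur C Z X Y f \<in> Ar C"
  and cur_dom[simp]: "f \<in> Ar C \<Longrightarrow> dom C f = prd C Z X \<Longrightarrow> cod C f = Y \<Longrightarrow> Z \<in> Obj C \<Longrightarrow> X \<in> Obj C \<Longrightarrow> dom C (cur C Z X Y f) = Z"
  and cur_cod[simp]: "f \<in> Ar C \<Longrightarrow> dom C f = prd C Z X \<Longrightarrow> cod C f = Y \<Longrightarrow> Z \<in> Obj C \<Longrightarrow> X \<in> Obj C \<Longrightarrow> cod C (cur C Z X Y f) = ex C X Y"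
  using cur_props by auto

lemma prodmap_eq: "f \<in> Ar C \<Longrightarrow> g \<in> Ar C \<Longrightarrow> dom C f = X \<Longrightarrow> dom C g = Y \<Longrightarrow>
   prodmap C f g = tup C (comp C f (pr1 C X Y)) (comp C g (pr2 C X Y))"
  by (simp add: prodmap_def)

lemma ev_cur0: "f \<in> Ar C \<Longrightarrow> dom C f = prd C Z X \<Longrightarrow> cod C f = Y \<Longrightarrow> Z \<in> Obj C \<Longrightarrow> X \<in> Obj C \<Longrightarrow>
   comp C (ev C X Y) (tup C (comp C (cur C Z X Y f) (pr1 C Z X)) (pr2 C Z X)) = f"
  using cur_props[of f Z X Y] prodmap_eq[of "cur C Z X Y f" "idm C X" Z X] by simp

lemma cur_uniq: "f \<in> Ar C \<Longrightarrow> dom C f = prd C Z X \<Longrightarrow> cod C f = Y \<Longrightarrow> Z \<in> Obj C \<Longrightarrow> X \<in> Obj C \<Longrightarrow>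
   h \<in> Ar C \<Longrightarrow> dom C h = Z \<Longrightarrow> cod C h = ex C X Y \<Longrightarrow>
   comp C (ev C X Y) (tup C (comp C h (pr1 C Z X)) (pr2 C Z X)) = f \<Longrightarrow> h = cur C Z X Y f"
  using cur_props[of f Z X Y] prodmap_eq[of h "idm C X" Z X] by (simp add: hom_def)

lemma ev_cur[simp]: "f \<in> Ar C \<Longrightarrow> dom C f = prd C Z X \<Longrightarrow> cod C f = Y \<Longrightarrow> Z \<in> Obj C \<Longrightarrow> X \<in> Obj C \<Longrightarrow>
   h \<in> Ar C \<Longrightarrow> k \<in> Ar C \<Longrightarrow> dom C h = dom C k \<Longrightarrow> cod C h = Z \<Longrightarrow> cod C k = X \<Longrightarrow>
   comp C (ev C X Y) (tup C (comp C (cur C Z X Y f) h) k) = comp C f (tup C h k)"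
proof -
  assume a: "f \<in> Ar C" "dom C f = prd C Z X" "cod C f = Y" "Z \<in> Obj C" "X \<in> Obj C"
    "h \<in> Ar C" "k \<in> Ar C" "dom C h = dom C k" "cod C h = Z" "cod C k = X"
  have Y: "Y \<in> Obj C" using a cod_obj by blast
  have "tup C (comp C (cur C Z X Y f) h) k
      = comp C (tup C (comp C (cur C Z X Y f) (pr1 C Z X)) (pr2 C Z X)) (tup C h k)"
    using a by simp
  then have "comp C (ev C X Y) (tup C (comp C (cur C Z X Y f) h) k)
     = comp C (comp C (ev C X Y) (tup C (comp C (cur C Z X Y f) (pr1 C Z X)) (pr2 C Z X))) (tup C h k)"
    using a Y by simp
  then show ?thesis using ev_cur0[OF a(1-5)] by simp
qed

lemma cur_comp[simp]: "f \<in> Ar C \<Longrightarrow> dom C f = prd C Z X \<Longrightarrow> cod C f = Y \<Longrightarrow> Z \<in> Obj C \<Longrightarrow> X \<in> Obj C \<Longrightarrow>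
   h \<in> Ar C \<Longrightarrow> cod C h = Z \<Longrightarrow>
   comp C (cur C Z X Y f) h = cur C (dom C h) X Y (comp C f (tup C (comp C h (pr1 C (dom C h) X)) (pr2 C (dom C h) X)))"
proof -
  assume a: "f \<in> Ar C" "dom C f = prd C Z X" "cod C f = Y" "Z \<in> Obj C" "X \<in> Obj C"
    "h \<in> Ar C" "cod C h = Z"
  have Y: "Y \<in> Obj C" using a cod_obj by blast
  let ?W = "dom C h"
  have W: "?W \<in> Obj C" using a by simp
  have e: "comp C (comp C (cur C Z X Y f) h) (pr1 C ?W X) = comp C (cur C Z X Y f) (comp C h (pr1 C ?W X))"
    using a W by simp
  show ?thesis
    apply (rule cur_uniq)
    using a W Y e by simp_all
qed

lemma DO_obj[simp]: "X \<in> Obj C \<Longrightarrow> DO C X \<in> Obj C"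
  and DA_id[simp]: "X \<in> Obj C \<Longrightarrow> DA C (idm C X) = idm C (DO C X)"
  and DA_ar[simp]: "f \<in> Ar C \<Longrightarrow> DA C f \<in> Ar C"
  and DA_dom[simp]: "f \<in> Ar C \<Longrightarrow> dom C (DA C f) = DO C (dom C f)"
  and DA_cod[simp]: "f \<in> Ar C \<Longrightarrow> cod C (DA C f) = DO C (cod C f)"
  using fun_ax unfolding is_endofunctor_def hom_def by auto

lemma DA_comp: "f \<in> Ar C \<Longrightarrow> g \<in> Ar C \<Longrightarrow> cod C f = dom C g \<Longrightarrow> DA C (comp C g f) = comp C (DA C g) (DA C f)"
  using fun_ax unfolding is_endofunctor_def by auto

lemma st_ar[simp]: "X \<in> Obj C \<Longrightarrow> Y \<in> Obj C \<Longrightarrow> st C X Y \<in> Ar C"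
  and st_dom[simp]: "X \<in> Obj C \<Longrightarrow> Y \<in> Obj C \<Longrightarrow> dom C (st C X Y) = prd C X (DO C Y)"
  and st_cod[simp]: "X \<in> Obj C \<Longrightarrow> Y \<in> Obj C \<Longrightarrow> cod C (st C X Y) = DO C (prd C X Y)"
  using stren unfolding is_strength_def hom_def by auto

lemma st_nat0: "f \<in> Ar C \<Longrightarrow> g \<in> Ar C \<Longrightarrow>
   comp C (st C (cod C f) (cod C g)) (prodmap C f (DA C g)) = comp C (DA C (prodmap C f g)) (st C (dom C f) (dom C g))"
  using stren unfolding is_strength_def by auto

lemma st_unit: "X \<in> Obj C \<Longrightarrow> comp C (DA C (pr2 C (trm C) X)) (st C (trm C) X) = pr2 C (trm C) (DO C X)"
  using stren unfolding is_strength_def by auto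

lemma st_assoc0: "X \<in> Obj C \<Longrightarrow> Y \<in> Obj C \<Longrightarrow> Z \<in> Obj C \<Longrightarrow>
        comp C (DA C (assoc C X Y Z)) (st C (prd C X Y) Z)
        = comp C (st C X (prd C Y Z)) (comp C (prodmap C (idm C X) (st C Y Z)) (assoc C X Y (DO C Z)))"
  using stren unfolding is_strength_def by auto

end


definition extE :: "('o, 'm, 'z) sccc_scheme \<Rightarrow> 'o \<Rightarrow> 'o \<Rightarrow> (nat \<Rightarrow> 'm) \<Rightarrow> nat \<Rightarrow> 'm" where
  "extE C X A fs = (\<lambda>i. case i of 0 \<Rightarrow> pr2 C X A | Suc j \<Rightarrow> comp C (fs j) (pr1 C X A))"

lemma extE_0[simp]: "extE C X A fs 0 = pr2 C X A" and extE_Suc[simp]: "extE C X A fs (Suc j) = comp C (fs j) (pr1 C X A)"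
  by (simp_all add: extE_def)

fun semE :: "('o, 'm, 'z) sccc_scheme \<Rightarrow> 'o \<Rightarrow> ty list \<Rightarrow> 'o \<Rightarrow> tm \<Rightarrow> (nat \<Rightarrow> 'm) \<Rightarrow> 'm" where
  "semE C b \<Gamma> X (Var i) fs = fs i"
| "semE C b \<Gamma> X Unit fs = bang C X"
| "semE C b \<Gamma> X (Pair t u) fs = tup C (semE C b \<Gamma> X t fs) (semE C b \<Gamma> X u fs)"
| "semE C b \<Gamma> X (Fst t) fs = (case tyof \<Gamma> t of
      Prod A B \<Rightarrow> comp C (pr1 C (ity C b A) (ity C b B)) (semE C b \<Gamma> X t fs) | _ \<Rightarrow> undefined)"
| "semE C b \<Gamma> X (Snd t) fs = (case tyof \<Gamma> t of
      Prod A B \<Rightarrow> comp C (pr2 C (ity C b A) (ity C b B)) (semE C b \<Gamma> X t fs) | _ \<Rightarrow> undefined)"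
| "semE C b \<Gamma> X (Lam A t) fs =
      cur C X (ity C b A) (ity C b (tyof (A # \<Gamma>) t)) (semE C b (A # \<Gamma>) (prd C X (ity C b A)) t (extE C X (ity C b A) fs))"
| "semE C b \<Gamma> X (App t u) fs = (case tyof \<Gamma> t of
      Arr A B \<Rightarrow> comp C (ev C (ity C b A) (ity C b B)) (tup C (semE C b \<Gamma> X t fs) (semE C b \<Gamma> X u fs))
    | _ \<Rightarrow> undefined)"
| "semE C b \<Gamma> X (Letmap t u) fs = (case tyof \<Gamma> t of
      Dia A \<Rightarrow> comp C (DA C (semE C b (A # \<Gamma>) (prd C X (ity C b A)) u (extE C X (ity C b A) fs)))
                 (comp C (st C X (ity C b A)) (tup C (idm C X) (semE C b \<Gamma> X t fs)))
    | _ \<Rightarrow> undefined)"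

lemma extE_ivar: "extE C (ictx C b \<Gamma>) (ity C b A) (ivar C b \<Gamma>) = ivar C b (A # \<Gamma>)"
  by (rule ext, simp add: extE_def split: nat.split)

lemma sem_semE: "sem C b \<Gamma> t = semE C b \<Gamma> (ictx C b \<Gamma>) t (ivar C b \<Gamma>)"
proof (induction t arbitrary: \<Gamma>)
  case (Lam A t) then show ?case by (simp add: extE_ivar[symmetric])
next
  case (Letmap t u) then show ?case by (simp add: extE_ivar[symmetric] split: ty.split)
qed (simp_all split: ty.split)

lemma semE_cong: "typing \<Gamma> t A \<Longrightarrow> (\<And>i. i < length \<Gamma> \<Longrightarrow> fs i = gs i) \<Longrightarrow> semE C b \<Gamma> X t fs = semE C b \<Gamma> X t gs"
proof (induction arbitrary: X fs gs rule: typing.induct)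
  case (T_Var i \<Gamma>) then show ?case by simp
next
  case (T_Unit \<Gamma>) then show ?case by simp
next
  case (T_Pair \<Gamma> t A u B)
  from T_Pair.IH(1)[where X=X and fs=fs and gs=gs, OF T_Pair.prems] T_Pair.IH(2)[where X=X and fs=fs and gs=gs, OF T_Pair.prems] show ?case by simp
next
  case (T_Fst \<Gamma> t A B)
  from T_Fst.IH[where X=X and fs=fs and gs=gs, OF T_Fst.prems] tyof_typing[OF T_Fst(1)] show ?case by simp
next
  case (T_Snd \<Gamma> t A B)
  from T_Snd.IH[where X=X and fs=fs and gs=gs, OF T_Snd.prems] tyof_typing[OF T_Snd(1)] show ?case by simp
next
  case (T_App \<Gamma> t A B u)
  from T_App.IH(1)[where X=X and fs=fs and gs=gs, OF T_App.prems] T_App.IH(2)[where X=X and fs=fs and gs=gs, OF T_App.prems] tyof_typing[OF T_App(1)] show ?case by simp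
next
  case (T_Lam A \<Gamma> t B)
  have "\<And>i. i < length (A # \<Gamma>) \<Longrightarrow> extE C X (ity C b A) fs i = extE C X (ity C b A) gs i"
    using T_Lam.prems by (auto simp: extE_def split: nat.split)
  from T_Lam.IH[where X="prd C X (ity C b A)" and fs="extE C X (ity C b A) fs" and gs="extE C X (ity C b A) gs", OF this] show ?case by simp
next
  case (T_Letmap \<Gamma> t A u B)
  have "\<And>i. i < length (A # \<Gamma>) \<Longrightarrow> extE C X (ity C b A) fs i = extE C X (ity C b A) gs i"
    using T_Letmap.prems by (auto simp: extE_def split: nat.split)
  from T_Letmap.IH(2)[where X="prd C X (ity C b A)" and fs="extE C X (ity C b A) fs" and gs="extE C X (ity C b A) gs", OF this] T_Letmap.IH(1)[where X=X and fs=fs and gs=gs, OF T_Letmap.prems] tyof_typing[OF T_Letmap(1)] show ?case by simp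
qed

lemma semE_lift: "typing \<Gamma> t A \<Longrightarrow> k \<le> length \<Gamma> \<Longrightarrow>
  semE C b (ins k B \<Gamma>) X (lift t k) fs = semE C b \<Gamma> X t (\<lambda>i. fs (if i < k then i else Suc i))"
proof (induction arbitrary: k X fs rule: typing.induct)
  case (T_Fst \<Gamma> t A B')
  then show ?case using tyof_typing[OF typing_lift[OF T_Fst(1) T_Fst(3)]] tyof_typing[OF T_Fst(1)] by simp
next
  case (T_Snd \<Gamma> t A B')
  then show ?case using tyof_typing[OF typing_lift[OF T_Snd(1) T_Snd(3)]] tyof_typing[OF T_Snd(1)] by simp
next
  case (T_App \<Gamma> t A B' u)
  then show ?case using tyof_typing[OF typing_lift[OF T_App(1) T_App(5)]] tyof_typing[OF T_App(1)] by simp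
next
  case (T_Lam A \<Gamma> t B')
  have e: "(\<lambda>i. extE C X (ity C b A) fs (if i < Suc k then i else Suc i))
      = extE C X (ity C b A) (\<lambda>i. fs (if i < k then i else Suc i))"
    by (rule ext, simp add: extE_def split: nat.split)
  have ty: "tyof (A # ins k B \<Gamma>) (lift t (Suc k)) = B'"
    using tyof_typing[OF typing_lift[OF T_Lam(1), of "Suc k" B]] T_Lam by simp
  show ?case using T_Lam.IH[of "Suc k"] T_Lam.prems e ty tyof_typing[OF T_Lam(1)] by simp
next
  case (T_Letmap \<Gamma> t A u B')
  have e: "(\<lambda>i. extE C X (ity C b A) fs (if i < Suc k then i else Suc i))
      = extE C X (ity C b A) (\<lambda>i. fs (if i < k then i else Suc i))"
    by (rule ext, simp add: extE_def split: nat.split)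
  have ty: "tyof (ins k B \<Gamma>) (lift t k) = Dia A"
    using tyof_typing[OF typing_lift[OF T_Letmap(1) T_Letmap(5)]] by simp
  show ?case using T_Letmap.IH(2)[of "Suc k"] T_Letmap.IH(1) T_Letmap.prems e ty tyof_typing[OF T_Letmap(1)] by simp
qed simp_all

context model
begin

lemma ity_obj[simp]: "ity C b A \<in> Obj C"
  by (induction A) (simp_all add: b_obj)

lemma ictx_obj[simp]: "ictx C b \<Gamma> \<in> Obj C"
  by (induction \<Gamma>) simp_all

definition envok :: "'o \<Rightarrow> ty list \<Rightarrow> (nat \<Rightarrow> 'm) \<Rightarrow> bool" where
  "envok X \<Gamma> fs \<longleftrightarrow> (\<forall>i < length \<Gamma>. fs i \<in> Ar C \<and> dom C (fs i) = X \<and> cod C (fs i) = ity C b (\<Gamma> ! i))"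

lemma envok_ext: "envok X \<Gamma> fs \<Longrightarrow> X \<in> Obj C \<Longrightarrow> envok (prd C X (ity C b A)) (A # \<Gamma>) (extE C X (ity C b A) fs)"
  unfolding envok_def by (auto simp: extE_def split: nat.split)

lemma semE_ar: "typing \<Gamma> t A \<Longrightarrow> X \<in> Obj C \<Longrightarrow> envok X \<Gamma> fs \<Longrightarrow>
   semE C b \<Gamma> X t fs \<in> Ar C \<and> dom C (semE C b \<Gamma> X t fs) = X \<and> cod C (semE C b \<Gamma> X t fs) = ity C b A"
proof (induction arbitrary: X fs rule: typing.induct)
  case (T_Var i \<Gamma>) then show ?case by (simp add: envok_def)
next
  case (T_Fst \<Gamma> t A B) then show ?case using tyof_typing[OF T_Fst(1)] by simp
next
  case (T_Snd \<Gamma> t A B) then show ?case using tyof_typing[OF T_Snd(1)] by simp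
next
  case (T_Lam A \<Gamma> t B)
  then show ?case using T_Lam.IH[OF _ envok_ext[OF T_Lam.prems(2,1)]] tyof_typing[OF T_Lam(1)] by simp
next
  case (T_App \<Gamma> t A B u) then show ?case using tyof_typing[OF T_App(1)] by simp
next
  case (T_Letmap \<Gamma> t A u B)
  then show ?case using T_Letmap.IH(2)[OF _ envok_ext[OF T_Letmap.prems(2,1)]] tyof_typing[OF T_Letmap(1)] by simp
qed simp_all

end


context model
begin

lemma DA_comp_r: "f \<in> Ar C \<Longrightarrow> g \<in> Ar C \<Longrightarrow> cod C f = dom C g \<Longrightarrow> r \<in> Ar C \<Longrightarrow> cod C r = DO C (dom C f) \<Longrightarrow>
   comp C (DA C g) (comp C (DA C f) r) = comp C (DA C (comp C g f)) r"
  by (simp add: DA_comp)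

lemma st_nat: "f \<in> Ar C \<Longrightarrow> g \<in> Ar C \<Longrightarrow> a \<in> Ar C \<Longrightarrow> c \<in> Ar C \<Longrightarrow> dom C a = dom C c \<Longrightarrow>
   cod C a = dom C f \<Longrightarrow> cod C c = DO C (dom C g) \<Longrightarrow>
   comp C (st C (cod C f) (cod C g)) (tup C (comp C f a) (comp C (DA C g) c))
   = comp C (DA C (tup C (comp C f (pr1 C (dom C f) (dom C g))) (comp C g (pr2 C (dom C f) (dom C g)))))
       (comp C (st C (dom C f) (dom C g)) (tup C a c))"
proof -
  assume a: "f \<in> Ar C" "g \<in> Ar C" "a \<in> Ar C" "c \<in> Ar C" "dom C a = dom C c"
   "cod C a = dom C f" "cod C c = DO C (dom C g)"
  let ?X = "dom C f" and ?Y = "dom C g"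
  have pm: "prodmap C f (DA C g) = tup C (comp C f (pr1 C ?X (DO C ?Y))) (comp C (DA C g) (pr2 C ?X (DO C ?Y)))"
    using a by (simp add: prodmap_eq)
  have pm2: "prodmap C f g = tup C (comp C f (pr1 C ?X ?Y)) (comp C g (pr2 C ?X ?Y))"
    using a by (simp add: prodmap_eq)
  have e: "comp C (prodmap C f (DA C g)) (tup C a c) = tup C (comp C f a) (comp C (DA C g) c)"
    using a by (simp add: pm)
  have "comp C (comp C (st C (cod C f) (cod C g)) (prodmap C f (DA C g))) (tup C a c)
     = comp C (comp C (DA C (prodmap C f g)) (st C ?X ?Y)) (tup C a c)"
    using st_nat0[OF a(1,2)] by simp
  then show ?thesis using a by (simp add: pm pm2)
qed

lemma st_pr2: "X \<in> Obj C \<Longrightarrow> A \<in> Obj C \<Longrightarrow> comp C (DA C (pr2 C X A)) (st C X A) = pr2 C X (DO C A)"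
proof -
  assume X: "X \<in> Obj C" and A: "A \<in> Obj C"
  let ?h = "tup C (comp C (bang C X) (pr1 C X A)) (pr2 C X A)"
  have h: "?h \<in> Ar C" "dom C ?h = prd C X A" "cod C ?h = prd C (trm C) A" using X A by simp_all
  have p: "pr2 C X A = comp C (pr2 C (trm C) A) ?h" using X A by simp
  have n: "comp C (st C (trm C) A) (tup C (comp C (bang C X) (pr1 C X (DO C A))) (comp C (DA C (idm C A)) (pr2 C X (DO C A))))
     = comp C (DA C (tup C (comp C (bang C X) (pr1 C X A)) (comp C (idm C A) (pr2 C X A))))
       (comp C (st C X A) (tup C (pr1 C X (DO C A)) (pr2 C X (DO C A))))"
    using st_nat[of "bang C X" "idm C A" "pr1 C X (DO C A)" "pr2 C X (DO C A)"] X A by simp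
  then have n': "comp C (DA C ?h) (st C X A) = comp C (st C (trm C) A) (tup C (comp C (bang C X) (pr1 C X (DO C A))) (pr2 C X (DO C A)))"
    using X A by simp
  have "comp C (DA C (pr2 C X A)) (st C X A) = comp C (comp C (DA C (pr2 C (trm C) A)) (DA C ?h)) (st C X A)"
    using p h X A DA_comp[of ?h "pr2 C (trm C) A"] by simp
  also have "\<dots> = comp C (DA C (pr2 C (trm C) A)) (comp C (DA C ?h) (st C X A))"
    using h X A by simp
  also have "\<dots> = comp C (comp C (DA C (pr2 C (trm C) A)) (st C (trm C) A)) (tup C (comp C (bang C X) (pr1 C X (DO C A))) (pr2 C X (DO C A)))"
    using n' X A by simp
  also have "\<dots> = pr2 C X (DO C A)" using st_unit[OF A] X A by simp
  finally show ?thesis .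
qed

end


context model
begin

lemma st_diag: "X \<in> Obj C \<Longrightarrow> A \<in> Obj C \<Longrightarrow> T \<in> Ar C \<Longrightarrow> dom C T = X \<Longrightarrow> cod C T = DO C A \<Longrightarrow>
  comp C (st C X (prd C X A)) (tup C (idm C X) (comp C (st C X A) (tup C (idm C X) T)))
  = comp C (DA C (tup C (pr1 C X A) (idm C (prd C X A)))) (comp C (st C X A) (tup C (idm C X) T))"
proof -
  assume X: "X \<in> Obj C" and A: "A \<in> Obj C" and T: "T \<in> Ar C" "dom C T = X" "cod C T = DO C A"
  let ?S = "comp C (st C X A) (tup C (idm C X) T)"
  let ?d = "tup C (idm C X) (idm C X)"
  let ?a = "assoc C X X (DO C A)"
  let ?a' = "assoc C X X A"
  let ?pm = "prodmap C (idm C X) (st C X A)"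
  have a_ar: "?a \<in> Ar C" "dom C ?a = prd C (prd C X X) (DO C A)" "cod C ?a = prd C X (prd C X (DO C A))"
    using X A by (simp_all add: assoc_def)
  have a'_ar: "?a' \<in> Ar C" "dom C ?a' = prd C (prd C X X) A" "cod C ?a' = prd C X (prd C X A)"
    using X A by (simp_all add: assoc_def)
  have pm: "?pm = tup C (comp C (idm C X) (pr1 C X (prd C X (DO C A)))) (comp C (st C X A) (pr2 C X (prd C X (DO C A))))"
    using X A by (simp add: prodmap_eq)
  have pm_ar: "?pm \<in> Ar C" "dom C ?pm = prd C X (prd C X (DO C A))" "cod C ?pm = prd C X (DO C (prd C X A))"
    using X A by (simp_all add: pm)
  have c1: "tup C (idm C X) ?S = comp C ?pm (tup C (idm C X) (tup C (idm C X) T))"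
    using X A T by (simp add: pm)
  have c2: "tup C (idm C X) (tup C (idm C X) T) = comp C ?a (tup C ?d T)"
    using X A T by (simp add: assoc_def)
  have c3: "comp C (DA C ?a') (st C (prd C X X) A) = comp C (st C X (prd C X A)) (comp C ?pm ?a)"
    using st_assoc0[OF X X A] .
  have c4: "comp C (st C (prd C X X) A) (tup C (comp C ?d (idm C X)) (comp C (DA C (idm C A)) T))
     = comp C (DA C (tup C (comp C ?d (pr1 C X A)) (comp C (idm C A) (pr2 C X A)))) ?S"
    using st_nat[of ?d "idm C A" "idm C X" T] X A T by simp
  have c4': "comp C (st C (prd C X X) A) (tup C ?d T)
     = comp C (DA C (tup C (comp C ?d (pr1 C X A)) (pr2 C X A))) ?S"
    using c4 X A T by simp
  have c5: "comp C ?a' (tup C (comp C ?d (pr1 C X A)) (pr2 C X A)) = tup C (pr1 C X A) (idm C (prd C X A))"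
    using X A by (simp add: assoc_def)
  have "comp C (st C X (prd C X A)) (tup C (idm C X) ?S)
      = comp C (st C X (prd C X A)) (comp C ?pm (comp C ?a (tup C ?d T)))"
    using c1 c2 by simp
  also have "\<dots> = comp C (comp C (st C X (prd C X A)) (comp C ?pm ?a)) (tup C ?d T)"
    using X A T a_ar pm_ar by simp
  also have "\<dots> = comp C (comp C (DA C ?a') (st C (prd C X X) A)) (tup C ?d T)"
    using c3 by simp
  also have "\<dots> = comp C (DA C ?a') (comp C (st C (prd C X X) A) (tup C ?d T))"
    using X A T a'_ar by simp
  also have "\<dots> = comp C (DA C ?a') (comp C (DA C (tup C (comp C ?d (pr1 C X A)) (pr2 C X A))) ?S)"
    using c4' by simp
  also have "\<dots> = comp C (DA C (comp C ?a' (tup C (comp C ?d (pr1 C X A)) (pr2 C X A)))) ?S"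
    using X A T a'_ar by (simp add: DA_comp_r)
  also have "\<dots> = comp C (DA C (tup C (pr1 C X A) (idm C (prd C X A)))) ?S"
    using c5 by simp
  finally show ?thesis .
qed

lemma letmap_beta_sem:
  assumes X: "X \<in> Obj C" and A: "A \<in> Obj C" and B: "B \<in> Obj C"
    and T: "T \<in> Ar C" "dom C T = X" "cod C T = DO C A"
    and U: "U \<in> Ar C" "dom C U = prd C X A" "cod C U = B"
    and U': "U' \<in> Ar C" "dom C U' = prd C X B" "cod C U' = D"
  shows "comp C (DA C U') (comp C (st C X B) (tup C (idm C X) (comp C (DA C U) (comp C (st C X A) (tup C (idm C X) T)))))
    = comp C (DA C (comp C U' (tup C (pr1 C X A) U))) (comp C (st C X A) (tup C (idm C X) T))"
proof -
  let ?S = "comp C (st C X A) (tup C (idm C X) T)"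
  have S: "?S \<in> Ar C" "dom C ?S = X" "cod C ?S = DO C (prd C X A)" using X A T by simp_all
  let ?pmU = "tup C (comp C (idm C X) (pr1 C X (prd C X A))) (comp C U (pr2 C X (prd C X A)))"
  have n: "comp C (st C X B) (tup C (comp C (idm C X) (idm C X)) (comp C (DA C U) ?S))
     = comp C (DA C ?pmU) (comp C (st C X (prd C X A)) (tup C (idm C X) ?S))"
    using st_nat[of "idm C X" U "idm C X" ?S] X A B U S by simp
  have n': "comp C (st C X B) (tup C (idm C X) (comp C (DA C U) ?S))
     = comp C (DA C ?pmU) (comp C (DA C (tup C (pr1 C X A) (idm C (prd C X A)))) ?S)"
    using n st_diag[OF X A T] X by simp
  have k: "comp C ?pmU (tup C (pr1 C X A) (idm C (prd C X A))) = tup C (pr1 C X A) U"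
    using X A U by simp
  have "comp C (DA C U') (comp C (st C X B) (tup C (idm C X) (comp C (DA C U) ?S)))
     = comp C (DA C U') (comp C (DA C ?pmU) (comp C (DA C (tup C (pr1 C X A) (idm C (prd C X A)))) ?S))"
    using n' by simp
  also have "\<dots> = comp C (DA C (comp C U' (comp C ?pmU (tup C (pr1 C X A) (idm C (prd C X A)))))) ?S"
    using X A B U U' S by (simp add: DA_comp_r)
  also have "\<dots> = comp C (DA C (comp C U' (tup C (pr1 C X A) U))) ?S" using k by simp
  finally show ?thesis .
qed

end


context model
begin

lemma envok_comp: "envok X \<Gamma> fs \<Longrightarrow> h \<in> Ar C \<Longrightarrow> cod C h = X \<Longrightarrow> envok (dom C h) \<Gamma> (\<lambda>i. comp C (fs i) h)"
  unfolding envok_def by auto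

lemma semE_nat: "typing \<Gamma> t A \<Longrightarrow> X \<in> Obj C \<Longrightarrow> envok X \<Gamma> fs \<Longrightarrow> h \<in> Ar C \<Longrightarrow> cod C h = X \<Longrightarrow>
   comp C (semE C b \<Gamma> X t fs) h = semE C b \<Gamma> (dom C h) t (\<lambda>i. comp C (fs i) h)"
proof (induction arbitrary: X fs h rule: typing.induct)
  case (T_Var i \<Gamma>) then show ?case by simp
next
  case (T_Unit \<Gamma>)
  then show ?case using bang_uniq[of "comp C (bang C X) h"] by simp
next
  case (T_Pair \<Gamma> t A u B)
  have t: "semE C b \<Gamma> X t fs \<in> Ar C" "dom C (semE C b \<Gamma> X t fs) = X" using semE_ar[OF T_Pair(1)] T_Pair.prems by auto
  have u: "semE C b \<Gamma> X u fs \<in> Ar C" "dom C (semE C b \<Gamma> X u fs) = X" using semE_ar[OF T_Pair(2)] T_Pair.prems by auto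
  show ?case using T_Pair.IH(1)[OF T_Pair.prems] T_Pair.IH(2)[OF T_Pair.prems] t u T_Pair.prems by simp
next
  case (T_Fst \<Gamma> t A B)
  have t: "semE C b \<Gamma> X t fs \<in> Ar C" "dom C (semE C b \<Gamma> X t fs) = X" "cod C (semE C b \<Gamma> X t fs) = prd C (ity C b A) (ity C b B)"
    using semE_ar[OF T_Fst(1)] T_Fst.prems by auto
  show ?case using T_Fst.IH[OF T_Fst.prems] t T_Fst.prems tyof_typing[OF T_Fst(1)] by simp
next
  case (T_Snd \<Gamma> t A B)
  have t: "semE C b \<Gamma> X t fs \<in> Ar C" "dom C (semE C b \<Gamma> X t fs) = X" "cod C (semE C b \<Gamma> X t fs) = prd C (ity C b A) (ity C b B)"
    using semE_ar[OF T_Snd(1)] T_Snd.prems by auto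
  show ?case using T_Snd.IH[OF T_Snd.prems] t T_Snd.prems tyof_typing[OF T_Snd(1)] by simp
next
  case (T_App \<Gamma> t A B u)
  have t: "semE C b \<Gamma> X t fs \<in> Ar C" "dom C (semE C b \<Gamma> X t fs) = X" "cod C (semE C b \<Gamma> X t fs) = ex C (ity C b A) (ity C b B)"
    using semE_ar[OF T_App(1)] T_App.prems by auto
  have u: "semE C b \<Gamma> X u fs \<in> Ar C" "dom C (semE C b \<Gamma> X u fs) = X" "cod C (semE C b \<Gamma> X u fs) = ity C b A"
    using semE_ar[OF T_App(2)] T_App.prems by auto
  show ?case using T_App.IH(1)[OF T_App.prems] T_App.IH(2)[OF T_App.prems] t u T_App.prems tyof_typing[OF T_App(1)] by simp
next
  case (T_Lam A \<Gamma> t B)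
  let ?A = "ity C b A" and ?W = "dom C h"
  let ?h' = "tup C (comp C h (pr1 C ?W ?A)) (pr2 C ?W ?A)"
  have X: "X \<in> Obj C" and W: "?W \<in> Obj C" using T_Lam.prems by auto
  have h': "?h' \<in> Ar C" "cod C ?h' = prd C X ?A" "dom C ?h' = prd C ?W ?A" using T_Lam.prems by simp_all
  have ok: "envok (prd C X ?A) (A # \<Gamma>) (extE C X ?A fs)" using envok_ext[OF T_Lam.prems(2,1)] .
  have t: "semE C b (A # \<Gamma>) (prd C X ?A) t (extE C X ?A fs) \<in> Ar C"
     "dom C (semE C b (A # \<Gamma>) (prd C X ?A) t (extE C X ?A fs)) = prd C X ?A"
     "cod C (semE C b (A # \<Gamma>) (prd C X ?A) t (extE C X ?A fs)) = ity C b B"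
    using semE_ar[OF T_Lam(1) _ ok] X by auto
  have IH: "comp C (semE C b (A # \<Gamma>) (prd C X ?A) t (extE C X ?A fs)) ?h'
     = semE C b (A # \<Gamma>) (prd C ?W ?A) t (\<lambda>i. comp C (extE C X ?A fs i) ?h')"
    using T_Lam.IH[OF _ ok h'(1,2)] X h' by simp
  have cg: "semE C b (A # \<Gamma>) (prd C ?W ?A) t (\<lambda>i. comp C (extE C X ?A fs i) ?h')
     = semE C b (A # \<Gamma>) (prd C ?W ?A) t (extE C ?W ?A (\<lambda>i. comp C (fs i) h))"
  proof (rule semE_cong[OF T_Lam(1)])
    fix i assume i: "i < length (A # \<Gamma>)"
    show "comp C (extE C X ?A fs i) ?h' = extE C ?W ?A (\<lambda>i. comp C (fs i) h) i"
    proof (cases i)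
      case 0 then show ?thesis using T_Lam.prems by simp
    next
      case (Suc j)
      then have "fs j \<in> Ar C" "dom C (fs j) = X" using i T_Lam.prems(2) unfolding envok_def by auto
      then show ?thesis using Suc T_Lam.prems by simp
    qed
  qed
  show ?case using t T_Lam.prems IH cg tyof_typing[OF T_Lam(1)] by simp
next
  case (T_Letmap \<Gamma> t A u B)
  let ?A = "ity C b A" and ?W = "dom C h"
  let ?h' = "tup C (comp C h (pr1 C ?W ?A)) (pr2 C ?W ?A)"
  have X: "X \<in> Obj C" and W: "?W \<in> Obj C" using T_Letmap.prems by auto
  have h: "h \<in> Ar C" "cod C h = X" using T_Letmap.prems by auto
  have h': "?h' \<in> Ar C" "cod C ?h' = prd C X ?A" "dom C ?h' = prd C ?W ?A" using T_Letmap.prems by simp_all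
  have ok: "envok (prd C X ?A) (A # \<Gamma>) (extE C X ?A fs)" using envok_ext[OF T_Letmap.prems(2,1)] .
  let ?U = "semE C b (A # \<Gamma>) (prd C X ?A) u (extE C X ?A fs)"
  let ?T = "semE C b \<Gamma> X t fs"
  have U: "?U \<in> Ar C" "dom C ?U = prd C X ?A" "cod C ?U = ity C b B"
    using semE_ar[OF T_Letmap(2) _ ok] X by auto
  have T: "?T \<in> Ar C" "dom C ?T = X" "cod C ?T = DO C ?A"
    using semE_ar[OF T_Letmap(1)] T_Letmap.prems by auto
  have IH: "comp C ?U ?h' = semE C b (A # \<Gamma>) (prd C ?W ?A) u (\<lambda>i. comp C (extE C X ?A fs i) ?h')"
    using T_Letmap.IH(2)[OF _ ok h'(1,2)] X h' by simp
  have cg: "semE C b (A # \<Gamma>) (prd C ?W ?A) u (\<lambda>i. comp C (extE C X ?A fs i) ?h')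
     = semE C b (A # \<Gamma>) (prd C ?W ?A) u (extE C ?W ?A (\<lambda>i. comp C (fs i) h))"
  proof (rule semE_cong[OF T_Letmap(2)])
    fix i assume i: "i < length (A # \<Gamma>)"
    show "comp C (extE C X ?A fs i) ?h' = extE C ?W ?A (\<lambda>i. comp C (fs i) h) i"
    proof (cases i)
      case 0 then show ?thesis using T_Letmap.prems by simp
    next
      case (Suc j)
      then have "fs j \<in> Ar C" "dom C (fs j) = X" using i T_Letmap.prems(2) unfolding envok_def by auto
      then show ?thesis using Suc T_Letmap.prems by simp
    qed
  qed
  have IHt: "comp C ?T h = semE C b \<Gamma> ?W t (\<lambda>i. comp C (fs i) h)"
    using T_Letmap.IH(1)[OF T_Letmap.prems] .
  have n: "comp C (st C X ?A) (tup C (comp C h (idm C ?W)) (comp C (DA C (idm C ?A)) (comp C ?T h)))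
    = comp C (DA C (tup C (comp C h (pr1 C ?W ?A)) (comp C (idm C ?A) (pr2 C ?W ?A)))) (comp C (st C ?W ?A) (tup C (idm C ?W) (comp C ?T h)))"
    using st_nat[of h "idm C ?A" "idm C ?W" "comp C ?T h"] h T X by simp
  have n': "comp C (st C X ?A) (comp C (tup C (idm C X) ?T) h)
    = comp C (DA C ?h') (comp C (st C ?W ?A) (tup C (idm C ?W) (comp C ?T h)))"
    using n h T X by simp
  have "comp C (comp C (DA C ?U) (comp C (st C X ?A) (tup C (idm C X) ?T))) h
     = comp C (DA C ?U) (comp C (st C X ?A) (comp C (tup C (idm C X) ?T) h))"
    using h T U X by simp
  also have "\<dots> = comp C (DA C ?U) (comp C (DA C ?h') (comp C (st C ?W ?A) (tup C (idm C ?W) (comp C ?T h))))"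
    using n' by simp
  also have "\<dots> = comp C (DA C (comp C ?U ?h')) (comp C (st C ?W ?A) (tup C (idm C ?W) (comp C ?T h)))"
    using h T U X h' by (simp add: DA_comp_r)
  finally show ?case using IH cg IHt tyof_typing[OF T_Letmap(1)] by simp
qed

end


definition senv :: "nat \<Rightarrow> (nat \<Rightarrow> 'm) \<Rightarrow> 'm \<Rightarrow> nat \<Rightarrow> 'm" where
  "senv k fs m = (\<lambda>i. if i < k then fs i else if i = k then m else fs (i - 1))"

lemma senv_ext: "senv (Suc k) (extE C X A fs) (comp C m (pr1 C X A)) = extE C X A (senv k fs m)"
  by (rule ext) (auto simp: senv_def extE_def split: nat.split)

context model
begin

lemma semE_subst: "typing \<Delta> t A \<Longrightarrow> \<Delta> = ins k B \<Gamma> \<Longrightarrow> typing \<Gamma> s B \<Longrightarrow> k \<le> length \<Gamma> \<Longrightarrow>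
   X \<in> Obj C \<Longrightarrow> envok X \<Gamma> fs \<Longrightarrow>
   semE C b \<Gamma> X (subst t k s) fs = semE C b \<Delta> X t (senv k fs (semE C b \<Gamma> X s fs))"
proof (induction arbitrary: \<Gamma> k s X fs rule: typing.induct)
  case (T_Var i \<Delta>) then show ?case by (simp add: senv_def)
next
  case (T_Unit \<Delta>) then show ?case by simp
next
  case (T_Pair \<Delta> t A u B')
  then show ?case using T_Pair.IH(1)[OF T_Pair.prems] T_Pair.IH(2)[OF T_Pair.prems] by simp
next
  case (T_Fst \<Delta> t A B')
  then show ?case using T_Fst.IH[OF T_Fst.prems] tyof_typing[OF T_Fst(1)]
      tyof_typing[OF typing_subst[OF T_Fst(1) T_Fst.prems(1-3)]] by simp
next
  case (T_Snd \<Delta> t A B')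
  then show ?case using T_Snd.IH[OF T_Snd.prems] tyof_typing[OF T_Snd(1)]
      tyof_typing[OF typing_subst[OF T_Snd(1) T_Snd.prems(1-3)]] by simp
next
  case (T_App \<Delta> t A B' u)
  then show ?case using T_App.IH(1)[OF T_App.prems] T_App.IH(2)[OF T_App.prems] tyof_typing[OF T_App(1)]
      tyof_typing[OF typing_subst[OF T_App(1) T_App.prems(1-3)]] by simp
next
  case (T_Lam A \<Delta> t B')
  let ?A = "ity C b A"
  have X: "X \<in> Obj C" using T_Lam.prems by simp
  have ok: "envok (prd C X ?A) (A # \<Gamma>) (extE C X ?A fs)" using envok_ext[OF T_Lam.prems(5,4)] .
  have s0: "typing (A # \<Gamma>) (lift s 0) B" using typing_lift0[OF T_Lam.prems(2)] .
  have IH: "semE C b (A # \<Gamma>) (prd C X ?A) (subst t (Suc k) (lift s 0)) (extE C X ?A fs)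
     = semE C b (A # \<Delta>) (prd C X ?A) t (senv (Suc k) (extE C X ?A fs) (semE C b (A # \<Gamma>) (prd C X ?A) (lift s 0) (extE C X ?A fs)))"
    using T_Lam.IH[where \<Gamma>="A # \<Gamma>" and k="Suc k" and s="lift s 0" and X="prd C X ?A" and fs="extE C X ?A fs"] T_Lam.prems s0 ok X by simp
  have sl: "semE C b (A # \<Gamma>) (prd C X ?A) (lift s 0) (extE C X ?A fs) = semE C b \<Gamma> (prd C X ?A) s (\<lambda>i. comp C (fs i) (pr1 C X ?A))"
    using semE_lift[OF T_Lam.prems(2), of 0 C b A "prd C X ?A" "extE C X ?A fs"] by simp
  have sn: "comp C (semE C b \<Gamma> X s fs) (pr1 C X ?A) = semE C b \<Gamma> (prd C X ?A) s (\<lambda>i. comp C (fs i) (pr1 C X ?A))"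
    using semE_nat[OF T_Lam.prems(2) X T_Lam.prems(5), of "pr1 C X ?A"] X by simp
  have ty1: "tyof (A # \<Gamma>) (subst t (Suc k) (lift s 0)) = B'"
    using tyof_typing[OF typing_subst[OF T_Lam(1), of "Suc k" B "A # \<Gamma>"]] T_Lam.prems s0 by simp
  have se: "senv (Suc k) (extE C X ?A fs) (comp C (semE C b \<Gamma> X s fs) (pr1 C X ?A)) = extE C X ?A (senv k fs (semE C b \<Gamma> X s fs))"
    by (rule senv_ext)
  show ?case using IH sl sn[symmetric] se ty1 tyof_typing[OF T_Lam(1)] by simp
next
  case (T_Letmap \<Delta> t A u B')
  let ?A = "ity C b A"
  have X: "X \<in> Obj C" using T_Letmap.prems by simp
  have ok: "envok (prd C X ?A) (A # \<Gamma>) (extE C X ?A fs)" using envok_ext[OF T_Letmap.prems(5,4)] .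
  have s0: "typing (A # \<Gamma>) (lift s 0) B" using typing_lift0[OF T_Letmap.prems(2)] .
  have IH: "semE C b (A # \<Gamma>) (prd C X ?A) (subst u (Suc k) (lift s 0)) (extE C X ?A fs)
     = semE C b (A # \<Delta>) (prd C X ?A) u (senv (Suc k) (extE C X ?A fs) (semE C b (A # \<Gamma>) (prd C X ?A) (lift s 0) (extE C X ?A fs)))"
    using T_Letmap.IH(2)[where \<Gamma>="A # \<Gamma>" and k="Suc k" and s="lift s 0" and X="prd C X ?A" and fs="extE C X ?A fs"] T_Letmap.prems s0 ok X by simp
  have sl: "semE C b (A # \<Gamma>) (prd C X ?A) (lift s 0) (extE C X ?A fs) = semE C b \<Gamma> (prd C X ?A) s (\<lambda>i. comp C (fs i) (pr1 C X ?A))"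
    using semE_lift[OF T_Letmap.prems(2), of 0 C b A "prd C X ?A" "extE C X ?A fs"] by simp
  have sn: "comp C (semE C b \<Gamma> X s fs) (pr1 C X ?A) = semE C b \<Gamma> (prd C X ?A) s (\<lambda>i. comp C (fs i) (pr1 C X ?A))"
    using semE_nat[OF T_Letmap.prems(2) X T_Letmap.prems(5), of "pr1 C X ?A"] X by simp
  have ty1: "tyof \<Gamma> (subst t k s) = Dia A"
    using tyof_typing[OF typing_subst[OF T_Letmap(1) T_Letmap.prems(1-3)]] .
  have se: "senv (Suc k) (extE C X ?A fs) (comp C (semE C b \<Gamma> X s fs) (pr1 C X ?A)) = extE C X ?A (senv k fs (semE C b \<Gamma> X s fs))"
    by (rule senv_ext)
  show ?case using IH sl sn[symmetric] se ty1 tyof_typing[OF T_Letmap(1)] T_Letmap.IH(1)[OF T_Letmap.prems] by simp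
qed

lemma ev_cur_id: "f \<in> Ar C \<Longrightarrow> dom C f = prd C Z X \<Longrightarrow> cod C f = Y \<Longrightarrow> Z \<in> Obj C \<Longrightarrow> X \<in> Obj C \<Longrightarrow>
   k \<in> Ar C \<Longrightarrow> dom C k = Z \<Longrightarrow> cod C k = X \<Longrightarrow>
   comp C (ev C X Y) (tup C (cur C Z X Y f) k) = comp C f (tup C (idm C Z) k)"
  using ev_cur[of f Z X Y "idm C Z" k] by simp

end


context model
begin

lemma soundE: "eqv \<Gamma> t u A \<Longrightarrow> X \<in> Obj C \<Longrightarrow> envok X \<Gamma> fs \<Longrightarrow> semE C b \<Gamma> X t fs = semE C b \<Gamma> X u fs"
proof (induction arbitrary: X fs rule: eqv.induct)
  case (E_refl \<Gamma> t A) then show ?case by simp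
next
  case (E_sym \<Gamma> t u A) then show ?case by simp
next
  case (E_trans \<Gamma> t u A v) then show ?case by simp
next
  case (C_Pair \<Gamma> t t' A u u' B) then show ?case by simp
next
  case (C_Fst \<Gamma> t t' A B)
  then show ?case using tyof_typing[OF eqv_typing1[OF C_Fst(1)]] tyof_typing[OF eqv_typing2[OF C_Fst(1)]] by simp
next
  case (C_Snd \<Gamma> t t' A B)
  then show ?case using tyof_typing[OF eqv_typing1[OF C_Snd(1)]] tyof_typing[OF eqv_typing2[OF C_Snd(1)]] by simp
next
  case (C_Lam A \<Gamma> t t' B)
  have ok: "envok (prd C X (ity C b A)) (A # \<Gamma>) (extE C X (ity C b A) fs)" using envok_ext[OF C_Lam.prems(2,1)] .
  show ?case using C_Lam.IH[OF _ ok] C_Lam.prems tyof_typing[OF eqv_typing1[OF C_Lam(1)]] tyof_typing[OF eqv_typing2[OF C_Lam(1)]] by simp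
next
  case (C_App \<Gamma> t t' A B u u')
  then show ?case using tyof_typing[OF eqv_typing1[OF C_App(1)]] tyof_typing[OF eqv_typing2[OF C_App(1)]] by simp
next
  case (C_Letmap \<Gamma> t t' A u u' B)
  have ok: "envok (prd C X (ity C b A)) (A # \<Gamma>) (extE C X (ity C b A) fs)" using envok_ext[OF C_Letmap.prems(2,1)] .
  show ?case using C_Letmap.IH(2)[OF _ ok] C_Letmap.IH(1)[OF C_Letmap.prems] C_Letmap.prems
    tyof_typing[OF eqv_typing1[OF C_Letmap(1)]] tyof_typing[OF eqv_typing2[OF C_Letmap(1)]] by simp
next
  case (unit_eta \<Gamma> t)
  then show ?case using semE_ar[OF unit_eta(1) unit_eta.prems] bang_uniq[of "semE C b \<Gamma> X t fs"] by simp
next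
  case (pair_eta \<Gamma> t A B)
  then show ?case using semE_ar[OF pair_eta(1) pair_eta.prems] tyof_typing[OF pair_eta(1)] by simp
next
  case (fst_beta \<Gamma> t A u B)
  then show ?case using semE_ar[OF fst_beta(1) fst_beta.prems] semE_ar[OF fst_beta(2) fst_beta.prems]
    tyof_typing[OF fst_beta(1)] tyof_typing[OF fst_beta(2)] by simp
next
  case (snd_beta \<Gamma> t A u B)
  then show ?case using semE_ar[OF snd_beta(1) snd_beta.prems] semE_ar[OF snd_beta(2) snd_beta.prems]
    tyof_typing[OF snd_beta(1)] tyof_typing[OF snd_beta(2)] by simp
next
  case (fun_eta \<Gamma> t A B)
  let ?A = "ity C b A" and ?B = "ity C b B" and ?m = "semE C b \<Gamma> X t fs"
  have X: "X \<in> Obj C" using fun_eta.prems by simp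
  have m: "?m \<in> Ar C" "dom C ?m = X" "cod C ?m = ex C ?A ?B" using semE_ar[OF fun_eta(1) fun_eta.prems] by auto
  have ty: "tyof (A # \<Gamma>) (lift t 0) = Arr A B" using tyof_typing[OF typing_lift0[OF fun_eta(1)]] .
  have tyA: "tyof (A # \<Gamma>) (App (lift t 0) (Var 0)) = B" using ty by simp
  have sl: "semE C b (A # \<Gamma>) (prd C X ?A) (lift t 0) (extE C X ?A fs) = semE C b \<Gamma> (prd C X ?A) t (\<lambda>i. comp C (fs i) (pr1 C X ?A))"
    using semE_lift[OF fun_eta(1), of 0 C b A "prd C X ?A" "extE C X ?A fs"] by simp
  have sn: "comp C ?m (pr1 C X ?A) = semE C b \<Gamma> (prd C X ?A) t (\<lambda>i. comp C (fs i) (pr1 C X ?A))"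
    using semE_nat[OF fun_eta(1) X fun_eta.prems(2), of "pr1 C X ?A"] X by simp
  have "?m = cur C X ?A ?B (comp C (ev C ?A ?B) (tup C (comp C ?m (pr1 C X ?A)) (pr2 C X ?A)))"
    by (rule cur_uniq) (use m X in simp_all)
  then show ?case using ty tyA sl sn[symmetric] by simp
next
  case (fun_beta A \<Gamma> t B u)
  let ?A = "ity C b A" and ?B = "ity C b B"
  have X: "X \<in> Obj C" using fun_beta.prems by simp
  have ok: "envok (prd C X ?A) (A # \<Gamma>) (extE C X ?A fs)" using envok_ext[OF fun_beta.prems(2,1)] .
  let ?F = "semE C b (A # \<Gamma>) (prd C X ?A) t (extE C X ?A fs)" and ?N = "semE C b \<Gamma> X u fs"
  have F: "?F \<in> Ar C" "dom C ?F = prd C X ?A" "cod C ?F = ?B" using semE_ar[OF fun_beta(1) _ ok] X by auto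
  have N: "?N \<in> Ar C" "dom C ?N = X" "cod C ?N = ?A" using semE_ar[OF fun_beta(2) fun_beta.prems] by auto
  have e1: "semE C b \<Gamma> X (App (Lam A t) u) fs = comp C ?F (tup C (idm C X) ?N)"
    using ev_cur_id[OF F X _ N] tyof_typing[OF fun_beta(1)] X by simp
  have e2: "comp C ?F (tup C (idm C X) ?N) = semE C b (A # \<Gamma>) X t (\<lambda>i. comp C (extE C X ?A fs i) (tup C (idm C X) ?N))"
    using semE_nat[OF fun_beta(1) _ ok, of "tup C (idm C X) ?N"] X N by simp
  have e3: "semE C b (A # \<Gamma>) X t (\<lambda>i. comp C (extE C X ?A fs i) (tup C (idm C X) ?N)) = semE C b (A # \<Gamma>) X t (senv 0 fs ?N)"
  proof (rule semE_cong[OF fun_beta(1)])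
    fix i assume i: "i < length (A # \<Gamma>)"
    show "comp C (extE C X ?A fs i) (tup C (idm C X) ?N) = senv 0 fs ?N i"
    proof (cases i)
      case 0 then show ?thesis using X N by (simp add: senv_def)
    next
      case (Suc j)
      then have "fs j \<in> Ar C" "dom C (fs j) = X" using i fun_beta.prems(2) unfolding envok_def by auto
      then show ?thesis using Suc X N by (simp add: senv_def)
    qed
  qed
  have e4: "semE C b \<Gamma> X (subst t 0 u) fs = semE C b (A # \<Gamma>) X t (senv 0 fs ?N)"
    using semE_subst[OF fun_beta(1), of 0 A \<Gamma> u X fs] fun_beta X by simp
  show ?case using e1 e2 e3 e4 by simp
next
  case (letmap_eta \<Gamma> t A)
  let ?A = "ity C b A" and ?m = "semE C b \<Gamma> X t fs"
  have X: "X \<in> Obj C" using letmap_eta.prems by simp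
  have m: "?m \<in> Ar C" "dom C ?m = X" "cod C ?m = DO C ?A" using semE_ar[OF letmap_eta(1) letmap_eta.prems] by auto
  have "comp C (DA C (pr2 C X ?A)) (comp C (st C X ?A) (tup C (idm C X) ?m))
      = comp C (comp C (DA C (pr2 C X ?A)) (st C X ?A)) (tup C (idm C X) ?m)" using X m by simp
  also have "\<dots> = ?m" using st_pr2[OF X ity_obj] X m by simp
  finally show ?case using tyof_typing[OF letmap_eta(1)] by simp
next
  case (letmap_beta \<Gamma> t A u B u' D)
  let ?A = "ity C b A" and ?B = "ity C b B"
  have X: "X \<in> Obj C" using letmap_beta.prems by simp
  have okA: "envok (prd C X ?A) (A # \<Gamma>) (extE C X ?A fs)" using envok_ext[OF letmap_beta.prems(2,1)] .
  have okB: "envok (prd C X ?B) (B # \<Gamma>) (extE C X ?B fs)" using envok_ext[OF letmap_beta.prems(2,1)] .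
  let ?T = "semE C b \<Gamma> X t fs"
  let ?U = "semE C b (A # \<Gamma>) (prd C X ?A) u (extE C X ?A fs)"
  let ?U' = "semE C b (B # \<Gamma>) (prd C X ?B) u' (extE C X ?B fs)"
  have T: "?T \<in> Ar C" "dom C ?T = X" "cod C ?T = DO C ?A" using semE_ar[OF letmap_beta(1) letmap_beta.prems] by auto
  have U: "?U \<in> Ar C" "dom C ?U = prd C X ?A" "cod C ?U = ?B" using semE_ar[OF letmap_beta(2) _ okA] X by auto
  have U': "?U' \<in> Ar C" "dom C ?U' = prd C X ?B" "cod C ?U' = ity C b D" using semE_ar[OF letmap_beta(3) _ okB] X by auto
  have tl: "typing (B # A # \<Gamma>) (lift u' 1) D" using typing_lift[OF letmap_beta(3), of 1 A] by simp
  have tsub: "typing (A # \<Gamma>) (subst (lift u' 1) 0 u) D" using typing_subst0[OF tl letmap_beta(2)] .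
  let ?h = "tup C (pr1 C X ?A) ?U"
  have h: "?h \<in> Ar C" "dom C ?h = prd C X ?A" "cod C ?h = prd C X ?B" using X U by simp_all
  have v1: "semE C b (A # \<Gamma>) (prd C X ?A) (subst (lift u' 1) 0 u) (extE C X ?A fs)
     = semE C b (B # A # \<Gamma>) (prd C X ?A) (lift u' 1) (senv 0 (extE C X ?A fs) ?U)"
    using semE_subst[OF tl, of 0 B "A # \<Gamma>" u "prd C X ?A" "extE C X ?A fs"] letmap_beta(2) okA X by simp
  have v2: "semE C b (B # A # \<Gamma>) (prd C X ?A) (lift u' 1) (senv 0 (extE C X ?A fs) ?U)
     = semE C b (B # \<Gamma>) (prd C X ?A) u' (\<lambda>i. senv 0 (extE C X ?A fs) ?U (if i < 1 then i else Suc i))"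
    using semE_lift[OF letmap_beta(3), of 1 C b A "prd C X ?A" "senv 0 (extE C X ?A fs) ?U"] by simp
  have v3: "comp C ?U' ?h = semE C b (B # \<Gamma>) (prd C X ?A) u' (\<lambda>i. comp C (extE C X ?B fs i) ?h)"
    using semE_nat[OF letmap_beta(3) _ okB h(1)] X h by simp
  have v4: "semE C b (B # \<Gamma>) (prd C X ?A) u' (\<lambda>i. comp C (extE C X ?B fs i) ?h)
     = semE C b (B # \<Gamma>) (prd C X ?A) u' (\<lambda>i. senv 0 (extE C X ?A fs) ?U (if i < 1 then i else Suc i))"
  proof (rule semE_cong[OF letmap_beta(3)])
    fix i assume i: "i < length (B # \<Gamma>)"
    show "comp C (extE C X ?B fs i) ?h = senv 0 (extE C X ?A fs) ?U (if i < 1 then i else Suc i)"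
    proof (cases i)
      case 0 then show ?thesis using X U by (simp add: senv_def)
    next
      case (Suc j)
      then have "fs j \<in> Ar C" "dom C (fs j) = X" using i letmap_beta.prems(2) unfolding envok_def by auto
      then show ?thesis using Suc X U by (simp add: senv_def)
    qed
  qed
  have V: "semE C b (A # \<Gamma>) (prd C X ?A) (subst (lift u' 1) 0 u) (extE C X ?A fs) = comp C ?U' ?h"
    using v1 v2 v3 v4 by simp
  have tyL: "tyof \<Gamma> (Letmap t u) = Dia B" using tyof_typing[OF typing.T_Letmap[OF letmap_beta(1,2)]] .
  have lb: "comp C (DA C ?U') (comp C (st C X ?B) (tup C (idm C X) (comp C (DA C ?U) (comp C (st C X ?A) (tup C (idm C X) ?T)))))
    = comp C (DA C (comp C ?U' ?h)) (comp C (st C X ?A) (tup C (idm C X) ?T))"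
    by (rule letmap_beta_sem[OF X ity_obj ity_obj T U U'])
  show ?case using lb V tyL tyof_typing[OF letmap_beta(1)] by simp
qed

lemma envok_ivar: "envok (ictx C b \<Gamma>) \<Gamma> (ivar C b \<Gamma>)"
proof (induction \<Gamma>)
  case Nil then show ?case by (simp add: envok_def)
next
  case (Cons A \<Gamma>)
  show ?case unfolding envok_def
  proof (intro allI impI)
    fix i assume i: "i < length (A # \<Gamma>)"
    show "ivar C b (A # \<Gamma>) i \<in> Ar C \<and> dom C (ivar C b (A # \<Gamma>) i) = ictx C b (A # \<Gamma>) \<and>
          cod C (ivar C b (A # \<Gamma>) i) = ity C b ((A # \<Gamma>) ! i)"
    proof (cases i)
      case 0 then show ?thesis by simp
    next
      case (Suc j)
      then have "ivar C b \<Gamma> j \<in> Ar C" "dom C (ivar C b \<Gamma> j) = ictx C b \<Gamma>" "cod C (ivar C b \<Gamma> j) = ity C b (\<Gamma> ! j)"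
        using Cons.IH i unfolding envok_def by auto
      then show ?thesis using Suc by simp
    qed
  qed
qed

lemma sound: "eqv \<Gamma> t u A \<Longrightarrow> sem C b \<Gamma> t = sem C b \<Gamma> u"
  using soundE[OF _ ictx_obj envok_ivar] by (simp add: sem_semE)

end

lemma soundness:
  assumes "eqv \<Gamma> t u A" and "is_model C b"
  shows "sem C b \<Gamma> t = sem C b \<Gamma> u"
proof -
  interpret model C b by (rule model.intro) (rule assms(2))
  show ?thesis by (rule sound[OF assms(1)])
qed


instance ty :: countable by countable_datatype
instance tm :: countable by countable_datatype

definition enc :: "ty \<Rightarrow> nat" where "enc A = to_nat A"
definition dec :: "nat \<Rightarrow> ty" where "dec n = from_nat n"
definition rep :: "ty \<Rightarrow> ty \<Rightarrow> tm \<Rightarrow> tm" where "rep X Y t = (SOME s. eqv [X] t s Y)"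
definition mk :: "ty \<Rightarrow> ty \<Rightarrow> tm \<Rightarrow> nat" where "mk X Y t = to_nat (X, Y, rep X Y t)"
definition trip :: "nat \<Rightarrow> ty \<times> ty \<times> tm" where "trip n = from_nat n"
definition adom :: "nat \<Rightarrow> nat" where "adom n = enc (fst (trip n))"
definition acod :: "nat \<Rightarrow> nat" where "acod n = enc (fst (snd (trip n)))"
definition tmof :: "nat \<Rightarrow> tm" where "tmof n = snd (snd (trip n))"

definition TM :: "(nat, nat) sccc" where
  "TM = \<lparr> Obj = range enc, Ar = {mk X Y t | X Y t. typing [X] t Y}, dom = adom, cod = acod,
     comp = (\<lambda>g f. mk (dec (adom f)) (dec (acod g)) (subst (tmof g) 0 (tmof f))),
     idm = (\<lambda>X. mk (dec X) (dec X) (Var 0)),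
     trm = enc One,
     bang = (\<lambda>X. mk (dec X) One Unit),
     prd = (\<lambda>X Y. enc (Prod (dec X) (dec Y))),
     pr1 = (\<lambda>X Y. mk (Prod (dec X) (dec Y)) (dec X) (Fst (Var 0))),
     pr2 = (\<lambda>X Y. mk (Prod (dec X) (dec Y)) (dec Y) (Snd (Var 0))),
     tup = (\<lambda>f g. mk (dec (adom f)) (Prod (dec (acod f)) (dec (acod g))) (Pair (tmof f) (tmof g))),
     ex = (\<lambda>X Y. enc (Arr (dec X) (dec Y))),
     ev = (\<lambda>X Y. mk (Prod (Arr (dec X) (dec Y)) (dec X)) (dec Y) (App (Fst (Var 0)) (Snd (Var 0)))),
     cur = (\<lambda>Z X Y f. mk (dec Z) (Arr (dec X) (dec Y)) (Lam (dec X) (subst (tmof f) 0 (Pair (Var 1) (Var 0))))),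
     DO = (\<lambda>X. enc (Dia (dec X))),
     DA = (\<lambda>f. mk (Dia (dec (adom f))) (Dia (dec (acod f))) (Letmap (Var 0) (tmof f))),
     st = (\<lambda>X Y. mk (Prod (dec X) (Dia (dec Y))) (Dia (Prod (dec X) (dec Y))) (Letmap (Snd (Var 0)) (Pair (Fst (Var 1)) (Var 0))))
   \<rparr>"

lemma dec_enc[simp]: "dec (enc A) = A" by (simp add: dec_def enc_def)
lemma enc_inj[simp]: "enc A = enc B \<longleftrightarrow> A = B" by (metis dec_enc)

lemma rep_eqv: "typing [X] t Y \<Longrightarrow> eqv [X] t (rep X Y t) Y"
  unfolding rep_def by (rule someI_ex) (blast intro: eqv.E_refl)

lemma rep_typing: "typing [X] t Y \<Longrightarrow> typing [X] (rep X Y t) Y"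
  using eqv_typing2[OF rep_eqv] .

lemma rep_cong: "eqv [X] t s Y \<Longrightarrow> rep X Y t = rep X Y s"
proof -
  assume e: "eqv [X] t s Y"
  have "(\<lambda>r. eqv [X] t r Y) = (\<lambda>r. eqv [X] s r Y)"
    using e by (auto intro: eqv.E_trans eqv.E_sym)
  then show ?thesis unfolding rep_def by simp
qed

lemma trip_mk[simp]: "trip (mk X Y t) = (X, Y, rep X Y t)" by (simp add: trip_def mk_def)
lemma adom_mk[simp]: "adom (mk X Y t) = enc X" by (simp add: adom_def)
lemma acod_mk[simp]: "acod (mk X Y t) = enc Y" by (simp add: acod_def)
lemma tmof_mk[simp]: "tmof (mk X Y t) = rep X Y t" by (simp add: tmof_def)

lemma mk_eq: "typing [X] t Y \<Longrightarrow> typing [X] s Y \<Longrightarrow> (mk X Y t = mk X Y s) = eqv [X] t s Y"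
proof
  assume t: "typing [X] t Y" and s: "typing [X] s Y" and e: "mk X Y t = mk X Y s"
  have "rep X Y t = rep X Y s" using e unfolding mk_def by (metis to_nat_split prod.inject)
  then show "eqv [X] t s Y" using rep_eqv[OF t] rep_eqv[OF s] by (metis eqv.E_sym eqv.E_trans)
next
  assume "eqv [X] t s Y" then show "mk X Y t = mk X Y s" unfolding mk_def using rep_cong by simp
qed

lemma mk_eqI: "eqv [X] t s Y \<Longrightarrow> mk X Y t = mk X Y s"
  unfolding mk_def using rep_cong by simp

lemma mk_rep[simp]: "typing [X] t Y \<Longrightarrow> mk X Y (rep X Y t) = mk X Y t"
  using mk_eqI[OF eqv.E_sym[OF rep_eqv]] by blast

lemma eqv_append1: "eqv \<Gamma> t u A \<Longrightarrow> eqv (\<Gamma> @ [B]) t u A"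
proof -
  assume e: "eqv \<Gamma> t u A"
  have "eqv (ins (length \<Gamma>) B \<Gamma>) (lift t (length \<Gamma>)) (lift u (length \<Gamma>)) A" using eqv_lift[OF e] by simp
  moreover have "lift t (length \<Gamma>) = t" using cl_lift[OF typing_cl[OF eqv_typing1[OF e]]] by simp
  moreover have "lift u (length \<Gamma>) = u" using cl_lift[OF typing_cl[OF eqv_typing2[OF e]]] by simp
  ultimately show ?thesis by (simp add: ins_def)
qed

lemma Obj_TM[simp]: "Obj TM = range enc" by (simp add: TM_def)
lemma Ar_TM: "Ar TM = {mk X Y t | X Y t. typing [X] t Y}" by (simp add: TM_def)
lemma dom_TM[simp]: "dom TM = adom" by (simp add: TM_def)
lemma cod_TM[simp]: "cod TM = acod" by (simp add: TM_def)
lemma trm_TM[simp]: "trm TM = enc One" by (simp add: TM_def)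
lemma idm_TM[simp]: "idm TM (enc A) = mk A A (Var 0)" by (simp add: TM_def)
lemma bang_TM[simp]: "bang TM (enc A) = mk A One Unit" by (simp add: TM_def)
lemma prd_TM[simp]: "prd TM (enc A) (enc B) = enc (Prod A B)" by (simp add: TM_def)
lemma pr1_TM[simp]: "pr1 TM (enc A) (enc B) = mk (Prod A B) A (Fst (Var 0))" by (simp add: TM_def)
lemma pr2_TM[simp]: "pr2 TM (enc A) (enc B) = mk (Prod A B) B (Snd (Var 0))" by (simp add: TM_def)
lemma ex_TM[simp]: "ex TM (enc A) (enc B) = enc (Arr A B)" by (simp add: TM_def)
lemma ev_TM[simp]: "ev TM (enc A) (enc B) = mk (Prod (Arr A B) A) B (App (Fst (Var 0)) (Snd (Var 0)))" by (simp add: TM_def)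
lemma DO_TM[simp]: "DO TM (enc A) = enc (Dia A)" by (simp add: TM_def)
lemma st_TM[simp]: "st TM (enc A) (enc B) = mk (Prod A (Dia B)) (Dia (Prod A B)) (Letmap (Snd (Var 0)) (Pair (Fst (Var 1)) (Var 0)))"
  by (simp add: TM_def)

lemma comp_mk[simp]: "typing [X] f Y \<Longrightarrow> typing [Y] g Z \<Longrightarrow> comp TM (mk Y Z g) (mk X Y f) = mk X Z (subst g 0 f)"
proof -
  assume f: "typing [X] f Y" and g: "typing [Y] g Z"
  have g': "eqv [Y, X] (rep Y Z g) g Z" using eqv_append1[OF eqv.E_sym[OF rep_eqv[OF g]], of X] by simp
  have "eqv [X] (subst (rep Y Z g) 0 (rep X Y f)) (subst g 0 f) Z"
    using eqv_subst0[OF g' eqv.E_sym[OF rep_eqv[OF f]]] .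
  then show ?thesis by (simp add: TM_def mk_eqI)
qed

lemma tup_mk[simp]: "typing [X] f A \<Longrightarrow> typing [X] g B \<Longrightarrow> tup TM (mk X A f) (mk X B g) = mk X (Prod A B) (Pair f g)"
proof -
  assume f: "typing [X] f A" and g: "typing [X] g B"
  have "eqv [X] (Pair (rep X A f) (rep X B g)) (Pair f g) (Prod A B)"
    using eqv.C_Pair[OF eqv.E_sym[OF rep_eqv[OF f]] eqv.E_sym[OF rep_eqv[OF g]]] .
  then show ?thesis by (simp add: TM_def mk_eqI)
qed

lemma cur_mk[simp]: "typing [Prod Z X] f Y \<Longrightarrow>
  cur TM (enc Z) (enc X) (enc Y) (mk (Prod Z X) Y f) = mk Z (Arr X Y) (Lam X (subst f 0 (Pair (Var 1) (Var 0))))"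
proof -
  assume f: "typing [Prod Z X] f Y"
  have f': "eqv [Prod Z X, X, Z] (rep (Prod Z X) Y f) f Y"
    using eqv_append1[OF eqv_append1[OF eqv.E_sym[OF rep_eqv[OF f]], of X], of Z] by simp
  have p: "eqv [X, Z] (Pair (Var 1) (Var 0)) (Pair (Var 1) (Var 0)) (Prod Z X)"
    by (rule eqv.E_refl) (simp add: typing_iff)
  have "eqv [Z] (Lam X (subst (rep (Prod Z X) Y f) 0 (Pair (Var 1) (Var 0)))) (Lam X (subst f 0 (Pair (Var 1) (Var 0)))) (Arr X Y)"
    using eqv.C_Lam[OF eqv_subst0[OF f' p]] .
  then show ?thesis by (simp add: TM_def mk_eqI)
qed

lemma DA_mk[simp]: "typing [X] f Y \<Longrightarrow> DA TM (mk X Y f) = mk (Dia X) (Dia Y) (Letmap (Var 0) f)"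
proof -
  assume f: "typing [X] f Y"
  have f': "eqv [X, Dia X] (rep X Y f) f Y"
    using eqv_append1[OF eqv.E_sym[OF rep_eqv[OF f]], of "Dia X"] by simp
  have v: "eqv [Dia X] (Var 0) (Var 0) (Dia X)" by (rule eqv.E_refl) (simp add: typing_iff)
  have "eqv [Dia X] (Letmap (Var 0) (rep X Y f)) (Letmap (Var 0) f) (Dia Y)"
    using eqv.C_Letmap[OF v f'] .
  then show ?thesis by (simp add: TM_def mk_eqI)
qed

lemma mk_Ar[simp]: "typing [X] t Y \<Longrightarrow> mk X Y t \<in> Ar TM" by (auto simp: Ar_TM)

lemma Ar_TM_E: "f \<in> Ar TM \<Longrightarrow> (\<And>X Y t. typing [X] t Y \<Longrightarrow> f = mk X Y t \<Longrightarrow> P) \<Longrightarrow> P"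
  by (auto simp: Ar_TM)

lemma hom_TM: "hom TM (enc A) (enc B) = {mk A B t | t. typing [A] t B}"
  by (auto simp: hom_def Ar_TM)

lemma ty_facts: "typing [X] f Y \<Longrightarrow> (\<forall>\<Delta>. check (X # \<Delta>) f = Some Y) \<and> cl 1 f \<and>
  (\<forall>\<Delta> s. check \<Delta> s = Some X \<longrightarrow> check \<Delta> (subst f 0 s) = Some Y)"
proof (intro conjI allI impI)
  assume f: "typing [X] f Y"
  fix \<Delta> show "check (X # \<Delta>) f = Some Y" using typing_append[OF f, of \<Delta>] by (simp add: typing_iff)
next
  assume f: "typing [X] f Y" then show "cl 1 f" using typing_cl by fastforce
next
  fix \<Delta> s assume f: "typing [X] f Y" and s: "check \<Delta> s = Some X"
  show "check \<Delta> (subst f 0 s) = Some Y"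
  proof -
    have "typing (X # \<Delta>) f Y" using typing_append[OF f, of \<Delta>] by simp
    from typing_subst0[OF this] s show ?thesis by (simp add: typing_iff)
  qed
qed


lemma cl_lift_Suc: "cl n s \<Longrightarrow> cl (Suc n) (lift s k)"
  by (induction s arbitrary: n k) auto

lemma cl_subst_gen: "cl (Suc j) t \<Longrightarrow> cl n s \<Longrightarrow> j \<le> n \<Longrightarrow> cl n (subst t j s)"
proof (induction t arbitrary: j n s)
  case (Lam A t) then show ?case using cl_lift_Suc[of n s 0] by simp
next
  case (Letmap t u) then show ?case using cl_lift_Suc[of n s 0] by simp
qed auto

lemma cl1_subst0[simp]: "cl 1 t \<Longrightarrow> cl n s \<Longrightarrow> cl n (subst t 0 s)"
  using cl_subst_gen[of 0 t n s] by simp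

lemma cl1_subst_Suc[simp]: "cl 1 t \<Longrightarrow> subst t (Suc k) s = t"
  using cl_subst[of 1 t "Suc k" s] by simp
lemma cl1_lift_Suc[simp]: "cl 1 t \<Longrightarrow> lift t (Suc k) = t"
  using cl_lift[of 1 t "Suc k"] by simp
lemma cl1_subst_Var0[simp]: "cl 1 t \<Longrightarrow> subst t 0 (Var 0) = t"
  using cl_subst_Var[of 0 t] by simp
lemma cl1_subst_Var1[simp]: "cl 1 t \<Longrightarrow> subst t 0 (Var 1) = lift t 0"
  using cl_subst_Var_Suc[of 0 t] by simp

declare cl1_subst_subst[simp] cl1_lift_subst[simp]

definition eq_in :: "ty list \<Rightarrow> ty \<Rightarrow> tm \<Rightarrow> tm \<Rightarrow> bool" where
  "eq_in \<Gamma> A t u \<longleftrightarrow> eqv \<Gamma> t u A"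

lemma eq_in_trans[trans]: "eq_in \<Gamma> A t u \<Longrightarrow> eq_in \<Gamma> A u v \<Longrightarrow> eq_in \<Gamma> A t v"
  unfolding eq_in_def by (rule eqv.E_trans)
lemma eq_in_synt[trans]: "eq_in \<Gamma> A t u \<Longrightarrow> u = v \<Longrightarrow> eq_in \<Gamma> A t v" by simp
lemma eq_in_synt2[trans]: "t = u \<Longrightarrow> eq_in \<Gamma> A u v \<Longrightarrow> eq_in \<Gamma> A t v" by simp

lemma mk_eq_in: "eq_in [X] Y t s \<Longrightarrow> mk X Y t = mk X Y s" unfolding eq_in_def by (rule mk_eqI)

lemma ei_refl: "check \<Gamma> t = Some A \<Longrightarrow> eq_in \<Gamma> A t t"
  unfolding eq_in_def by (rule eqv.E_refl) (simp add: typing_iff)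
lemma ei_sym: "eq_in \<Gamma> A t u \<Longrightarrow> eq_in \<Gamma> A u t"
  unfolding eq_in_def by (rule eqv.E_sym)
lemma ei_pair: "eq_in \<Gamma> A t t' \<Longrightarrow> eq_in \<Gamma> B u u' \<Longrightarrow> eq_in \<Gamma> (Prod A B) (Pair t u) (Pair t' u')"
  unfolding eq_in_def by (rule eqv.C_Pair)
lemma ei_fst: "eq_in \<Gamma> (Prod A B) t t' \<Longrightarrow> eq_in \<Gamma> A (Fst t) (Fst t')"
  unfolding eq_in_def by (rule eqv.C_Fst)
lemma ei_snd: "eq_in \<Gamma> (Prod A B) t t' \<Longrightarrow> eq_in \<Gamma> B (Snd t) (Snd t')"
  unfolding eq_in_def by (rule eqv.C_Snd)
lemma ei_lam: "eq_in (A # \<Gamma>) B t t' \<Longrightarrow> eq_in \<Gamma> (Arr A B) (Lam A t) (Lam A t')"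
  unfolding eq_in_def by (rule eqv.C_Lam)
lemma ei_app: "eq_in \<Gamma> (Arr A B) t t' \<Longrightarrow> eq_in \<Gamma> A u u' \<Longrightarrow> eq_in \<Gamma> B (App t u) (App t' u')"
  unfolding eq_in_def by (rule eqv.C_App)
lemma ei_letmap: "eq_in \<Gamma> (Dia A) t t' \<Longrightarrow> eq_in (A # \<Gamma>) B u u' \<Longrightarrow> eq_in \<Gamma> (Dia B) (Letmap t u) (Letmap t' u')"
  unfolding eq_in_def by (rule eqv.C_Letmap)
lemma ei_unit: "check \<Gamma> t = Some One \<Longrightarrow> eq_in \<Gamma> One t Unit"
  unfolding eq_in_def by (rule eqv.unit_eta) (simp add: typing_iff)
lemma ei_pair_eta: "check \<Gamma> t = Some (Prod A B) \<Longrightarrow> eq_in \<Gamma> (Prod A B) t (Pair (Fst t) (Snd t))"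
  unfolding eq_in_def by (rule eqv.pair_eta) (simp add: typing_iff)
lemma ei_fst_beta: "check \<Gamma> t = Some A \<Longrightarrow> check \<Gamma> u = Some B \<Longrightarrow> eq_in \<Gamma> A (Fst (Pair t u)) t"
  unfolding eq_in_def by (rule eqv.fst_beta) (simp_all add: typing_iff)
lemma ei_snd_beta: "check \<Gamma> t = Some A \<Longrightarrow> check \<Gamma> u = Some B \<Longrightarrow> eq_in \<Gamma> B (Snd (Pair t u)) u"
  unfolding eq_in_def by (rule eqv.snd_beta) (simp_all add: typing_iff)
lemma ei_fun_eta: "check \<Gamma> t = Some (Arr A B) \<Longrightarrow> eq_in \<Gamma> (Arr A B) t (Lam A (App (lift t 0) (Var 0)))"
  unfolding eq_in_def by (rule eqv.fun_eta) (simp add: typing_iff)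
lemma ei_fun_beta: "check (A # \<Gamma>) t = Some B \<Longrightarrow> check \<Gamma> u = Some A \<Longrightarrow> eq_in \<Gamma> B (App (Lam A t) u) (subst t 0 u)"
  unfolding eq_in_def by (rule eqv.fun_beta) (simp_all add: typing_iff)
lemma ei_letmap_eta: "check \<Gamma> t = Some (Dia A) \<Longrightarrow> eq_in \<Gamma> (Dia A) t (Letmap t (Var 0))"
  unfolding eq_in_def by (rule eqv.letmap_eta) (simp add: typing_iff)
lemma ei_letmap_beta: "check \<Gamma> t = Some (Dia A) \<Longrightarrow> check (A # \<Gamma>) u = Some B \<Longrightarrow> check (B # \<Gamma>) u' = Some C
  \<Longrightarrow> eq_in \<Gamma> (Dia C) (Letmap (Letmap t u) u') (Letmap t (subst (lift u' 1) 0 u))"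
  unfolding eq_in_def by (rule eqv.letmap_beta) (simp_all add: typing_iff)
lemma ei_subst0: "eq_in (B # \<Gamma>) A t u \<Longrightarrow> eq_in \<Gamma> B s s' \<Longrightarrow> eq_in \<Gamma> A (subst t 0 s) (subst u 0 s')"
  unfolding eq_in_def by (rule eqv_subst0)
lemma ei_subst_arg: "check [B] t = Some A \<Longrightarrow> eq_in \<Gamma> B s s' \<Longrightarrow> eq_in \<Gamma> A (subst t 0 s) (subst t 0 s')"
proof -
  assume t: "check [B] t = Some A" and e: "eq_in \<Gamma> B s s'"
  have "typing (B # \<Gamma>) t A" using typing_append[of "[B]" t A \<Gamma>] t by (simp add: typing_iff)
  then have "eq_in (B # \<Gamma>) A t t" unfolding eq_in_def by (rule eqv.E_refl)
  from ei_subst0[OF this e] show ?thesis .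
qed

lemma mk_hom[simp]: "check [A] t = Some B \<Longrightarrow> mk A B t \<in> hom TM (enc A) (enc B)"
  by (auto simp: hom_TM typing_iff)

lemma TM_category: "is_category TM"
proof -
  have c1: "\<forall>f \<in> Ar TM. dom TM f \<in> Obj TM \<and> cod TM f \<in> Obj TM" by (auto elim!: Ar_TM_E)
  have c2: "\<forall>X \<in> Obj TM. idm TM X \<in> hom TM X X" by (auto simp: typing_iff)
  have c3: "\<forall>f \<in> Ar TM. \<forall>g \<in> Ar TM. cod TM f = dom TM g \<longrightarrow> comp TM g f \<in> hom TM (dom TM f) (cod TM g)"
  proof (intro ballI impI)
    fix f g assume f: "f \<in> Ar TM" and g: "g \<in> Ar TM" and fg: "cod TM f = dom TM g"
    obtain X Y a where a: "typing [X] a Y" "f = mk X Y a" using f by (auto elim!: Ar_TM_E)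
    obtain Y' Z c where c: "typing [Y'] c Z" "g = mk Y' Z c" using g by (auto elim!: Ar_TM_E)
    have Y': "Y' = Y" using fg a c by simp
    show "comp TM g f \<in> hom TM (dom TM f) (cod TM g)"
      using a c Y' ty_facts[OF a(1)] ty_facts[OF c(1)] by (simp add: typing_iff)
  qed
  have c4: "\<forall>f \<in> Ar TM. comp TM (idm TM (cod TM f)) f = f \<and> comp TM f (idm TM (dom TM f)) = f"
  proof
    fix f assume "f \<in> Ar TM"
    then obtain X Y a where a: "typing [X] a Y" "f = mk X Y a" by (auto elim!: Ar_TM_E)
    show "comp TM (idm TM (cod TM f)) f = f \<and> comp TM f (idm TM (dom TM f)) = f"
      using a ty_facts[OF a(1)] by (simp add: typing_iff)
  qed
  have c5: "\<forall>f \<in> Ar TM. \<forall>g \<in> Ar TM. \<forall>h \<in> Ar TM. cod TM f = dom TM g \<longrightarrow> cod TM g = dom TM h \<longrightarrow>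
        comp TM h (comp TM g f) = comp TM (comp TM h g) f"
  proof (intro ballI impI)
    fix f g h assume f: "f \<in> Ar TM" and g: "g \<in> Ar TM" and h: "h \<in> Ar TM"
      and fg: "cod TM f = dom TM g" and gh: "cod TM g = dom TM h"
    obtain X Y a where a: "typing [X] a Y" "f = mk X Y a" using f by (auto elim!: Ar_TM_E)
    obtain Y' Z c where c: "typing [Y'] c Z" "g = mk Y' Z c" using g by (auto elim!: Ar_TM_E)
    obtain Z' W d where d: "typing [Z'] d W" "h = mk Z' W d" using h by (auto elim!: Ar_TM_E)
    have Y': "Y' = Y" using fg a c by simp
    have Z': "Z' = Z" using gh c d by simp
    show "comp TM h (comp TM g f) = comp TM (comp TM h g) f"
      using a c d Y' Z' ty_facts[OF a(1)] ty_facts[OF c(1)] ty_facts[OF d(1)] by (simp add: typing_iff)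
  qed
  show ?thesis unfolding is_category_def using c1 c2 c3 c4 c5 by blast
qed

lemma TM_terminal: "is_terminal TM"
proof -
  have "\<forall>X \<in> Obj TM. bang TM X \<in> hom TM X (trm TM) \<and> (\<forall>f\<in>hom TM X (trm TM). f = bang TM X)"
  proof
    fix X assume "X \<in> Obj TM"
    then obtain A where A: "X = enc A" by auto
    have 1: "bang TM X \<in> hom TM X (trm TM)" using A by simp
    have 2: "\<forall>f\<in>hom TM X (trm TM). f = bang TM X"
    proof
      fix f assume "f \<in> hom TM X (trm TM)"
      then obtain t where t: "typing [A] t One" "f = mk A One t" using A by (auto simp: hom_TM)
      show "f = bang TM X" using t A mk_eqI[OF eqv.unit_eta[OF t(1)]] by simp
    qed
    show "bang TM X \<in> hom TM X (trm TM) \<and> (\<forall>f\<in>hom TM X (trm TM). f = bang TM X)" using 1 2 by blast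
  qed
  then show ?thesis unfolding is_terminal_def by simp
qed


lemma TM_products: "has_products TM"
  unfolding has_products_def
proof (intro ballI)
  fix X Y assume "X \<in> Obj TM" "Y \<in> Obj TM"
  then obtain A B where AB: "X = enc A" "Y = enc B" by auto
  have inner: "\<forall>Z \<in> Obj TM. \<forall>f \<in> hom TM Z X. \<forall>g \<in> hom TM Z Y.
        tup TM f g \<in> hom TM Z (prd TM X Y) \<and>
        comp TM (pr1 TM X Y) (tup TM f g) = f \<and> comp TM (pr2 TM X Y) (tup TM f g) = g \<and>
        (\<forall>h \<in> hom TM Z (prd TM X Y). comp TM (pr1 TM X Y) h = f \<and> comp TM (pr2 TM X Y) h = g
            \<longrightarrow> h = tup TM f g)"
  proof (intro ballI)
    fix Z f g assume Z: "Z \<in> Obj TM" and f: "f \<in> hom TM Z X" and g: "g \<in> hom TM Z Y"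
    obtain W where W: "Z = enc W" using Z by auto
    obtain a where a: "typing [W] a A" "f = mk W A a" using f AB W by (auto simp: hom_TM)
    obtain c where c: "typing [W] c B" "g = mk W B c" using g AB W by (auto simp: hom_TM)
    note fa = ty_facts[OF a(1)] and fc = ty_facts[OF c(1)]
    have 1: "tup TM f g \<in> hom TM Z (prd TM X Y)" using a c AB W fa fc by (simp add: typing_iff)
    have 2: "comp TM (pr1 TM X Y) (tup TM f g) = f"
      using a c AB W fa fc by (simp add: typing_iff mk_eq_in ei_fst_beta)
    have 3: "comp TM (pr2 TM X Y) (tup TM f g) = g"
      using a c AB W fa fc by (simp add: typing_iff mk_eq_in ei_snd_beta)
    have 4: "\<forall>h \<in> hom TM Z (prd TM X Y). comp TM (pr1 TM X Y) h = f \<and> comp TM (pr2 TM X Y) h = g \<longrightarrow> h = tup TM f g"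
    proof (intro ballI impI)
      fix h assume h: "h \<in> hom TM Z (prd TM X Y)" and e: "comp TM (pr1 TM X Y) h = f \<and> comp TM (pr2 TM X Y) h = g"
      obtain d where d: "typing [W] d (Prod A B)" "h = mk W (Prod A B) d" using h AB W by (auto simp: hom_TM)
      note fd = ty_facts[OF d(1)]
      have e1: "mk W A (Fst d) = mk W A a" using e d a AB W fd by (simp add: typing_iff)
      have e2: "mk W B (Snd d) = mk W B c" using e d c AB W fd by (simp add: typing_iff)
      have q1: "eq_in [W] A (Fst d) a" using e1 mk_eq[of W "Fst d" A a] a fd unfolding eq_in_def by (simp add: typing_iff)
      have q2: "eq_in [W] B (Snd d) c" using e2 mk_eq[of W "Snd d" B c] c fd unfolding eq_in_def by (simp add: typing_iff)
      have "eq_in [W] (Prod A B) d (Pair (Fst d) (Snd d))" using fd by (simp add: ei_pair_eta)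
      also have "eq_in [W] (Prod A B) (Pair (Fst d) (Snd d)) (Pair a c)" by (rule ei_pair[OF q1 q2])
      finally show "h = tup TM f g" using d a c AB W fa fc by (simp add: typing_iff mk_eq_in)
    qed
    show "tup TM f g \<in> hom TM Z (prd TM X Y) \<and>
        comp TM (pr1 TM X Y) (tup TM f g) = f \<and> comp TM (pr2 TM X Y) (tup TM f g) = g \<and>
        (\<forall>h \<in> hom TM Z (prd TM X Y). comp TM (pr1 TM X Y) h = f \<and> comp TM (pr2 TM X Y) h = g
            \<longrightarrow> h = tup TM f g)" using 1 2 3 4 by blast
  qed
  have "prd TM X Y \<in> Obj TM \<and> pr1 TM X Y \<in> hom TM (prd TM X Y) X \<and> pr2 TM X Y \<in> hom TM (prd TM X Y) Y"
    using AB by simp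
  then show "prd TM X Y \<in> Obj TM \<and> pr1 TM X Y \<in> hom TM (prd TM X Y) X \<and> pr2 TM X Y \<in> hom TM (prd TM X Y) Y \<and>
     (\<forall>Z \<in> Obj TM. \<forall>f \<in> hom TM Z X. \<forall>g \<in> hom TM Z Y.
        tup TM f g \<in> hom TM Z (prd TM X Y) \<and>
        comp TM (pr1 TM X Y) (tup TM f g) = f \<and> comp TM (pr2 TM X Y) (tup TM f g) = g \<and>
        (\<forall>h \<in> hom TM Z (prd TM X Y). comp TM (pr1 TM X Y) h = f \<and> comp TM (pr2 TM X Y) h = g
            \<longrightarrow> h = tup TM f g))" using inner by blast
qed


lemma cl1_subst_Var1'[simp]: "cl 1 t \<Longrightarrow> subst t 0 (Var (Suc 0)) = lift t 0"
  using cl1_subst_Var1[of t] by simp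

lemma TM_ev_comp:
  assumes d: "typing [W] d (Arr A B)"
  shows "comp TM (ev TM (enc A) (enc B)) (prodmap TM (mk W (Arr A B) d) (idm TM (enc A)))
     = mk (Prod W A) B (App (Fst (Pair (subst d 0 (Fst (Var 0))) (Snd (Var 0)))) (Snd (Pair (subst d 0 (Fst (Var 0))) (Snd (Var 0)))))"
  using ty_facts[OF d] d by (simp add: typing_iff prodmap_def)

lemma eq_in_append2: "eq_in [X] T t u \<Longrightarrow> eq_in [X, A, W] T t u"
  unfolding eq_in_def using eqv_append1[OF eqv_append1, of "[X]" t u T A W] by simp

lemma TM_ev_cur:
  assumes a: "typing [Prod W A] a B"
  shows "comp TM (ev TM (enc A) (enc B)) (prodmap TM (cur TM (enc W) (enc A) (enc B) (mk (Prod W A) B a)) (idm TM (enc A)))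
      = mk (Prod W A) B a"
proof -
  note fa = ty_facts[OF a]
  let ?L = "Lam A (subst a 0 (Pair (Var 1) (Var 0)))"
  have L: "typing [W] ?L (Arr A B)" using fa by (simp add: typing_iff)
  let ?L' = "Lam A (subst a 0 (Pair (Fst (Var 1)) (Var 0)))"
  have sL: "subst ?L 0 (Fst (Var 0)) = ?L'" using fa by simp
  have "eq_in [Prod W A] B (App (Fst (Pair ?L' (Snd (Var 0)))) (Snd (Pair ?L' (Snd (Var 0))))) (App ?L' (Snd (Var 0)))"
    by (rule ei_app[OF ei_fst_beta ei_snd_beta]) (use fa in simp_all)
  also have "eq_in [Prod W A] B (App ?L' (Snd (Var 0))) (subst (subst a 0 (Pair (Fst (Var 1)) (Var 0))) 0 (Snd (Var 0)))"
    by (rule ei_fun_beta) (use fa in simp_all)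
  also have "subst (subst a 0 (Pair (Fst (Var 1)) (Var 0))) 0 (Snd (Var 0)) = subst a 0 (Pair (Fst (Var 0)) (Snd (Var 0)))"
    using fa by simp
  also have "eq_in [Prod W A] B (subst a 0 (Pair (Fst (Var 0)) (Snd (Var 0)))) (subst a 0 (Var 0))"
    by (rule ei_subst_arg[OF _ ei_sym[OF ei_pair_eta]]) (use fa in simp_all)
  also have "subst a 0 (Var 0) = a" using fa by simp
  finally have e: "eq_in [Prod W A] B (App (Fst (Pair ?L' (Snd (Var 0)))) (Snd (Pair ?L' (Snd (Var 0))))) a" .
  show ?thesis using TM_ev_comp[OF L] a sL mk_eq_in[OF e] by simp
qed

lemma TM_cur_uniq:
  assumes a: "typing [Prod W A] a B" and d: "typing [W] d (Arr A B)"
    and e: "comp TM (ev TM (enc A) (enc B)) (prodmap TM (mk W (Arr A B) d) (idm TM (enc A))) = mk (Prod W A) B a"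
  shows "mk W (Arr A B) d = cur TM (enc W) (enc A) (enc B) (mk (Prod W A) B a)"
proof -
  note fa = ty_facts[OF a] and fd = ty_facts[OF d]
  let ?D = "subst d 0 (Fst (Var 0))"
  let ?E = "App (Fst (Pair ?D (Snd (Var 0)))) (Snd (Pair ?D (Snd (Var 0))))"
  have tE: "typing [Prod W A] ?E B" using fd by (simp add: typing_iff)
  have q: "eq_in [Prod W A] B ?E a"
    using e TM_ev_comp[OF d] mk_eq[OF tE a] unfolding eq_in_def by simp
  let ?P = "Pair (Var 1) (Var 0)"
  have "eq_in [A, W] B (App (lift d 0) (Var 0)) (App (subst d 0 (Fst ?P)) (Snd ?P))"
  proof (rule ei_app)
    show "eq_in [A, W] (Arr A B) (lift d 0) (subst d 0 (Fst ?P))"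
    proof -
      have "eq_in [A, W] (Arr A B) (subst d 0 (Fst ?P)) (subst d 0 (Var 1))"
        by (rule ei_subst_arg[OF _ ei_fst_beta]) (use fd in simp_all)
      then show ?thesis using fd by (simp add: ei_sym)
    qed
    show "eq_in [A, W] A (Var 0) (Snd ?P)" by (rule ei_sym[OF ei_snd_beta]) simp_all
  qed
  also have "eq_in [A, W] B (App (subst d 0 (Fst ?P)) (Snd ?P)) (subst ?E 0 ?P)"
  proof -
    let ?X1 = "subst d 0 (Fst ?P)"
    have et: "subst ?E 0 ?P = App (Fst (Pair ?X1 (Snd ?P))) (Snd (Pair ?X1 (Snd ?P)))" using fd by simp
    have "eq_in [A, W] B (App (Fst (Pair ?X1 (Snd ?P))) (Snd (Pair ?X1 (Snd ?P)))) (App ?X1 (Snd ?P))"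
      by (rule ei_app[OF ei_fst_beta ei_snd_beta]) (use fd in simp_all)
    then show ?thesis using et by (simp add: ei_sym)
  qed
  also have "eq_in [A, W] B (subst ?E 0 ?P) (subst a 0 ?P)"
    by (rule ei_subst0[OF eq_in_append2[OF q] ei_refl]) simp
  finally have inner: "eq_in [A, W] B (App (lift d 0) (Var 0)) (subst a 0 ?P)" .
  have "eq_in [W] (Arr A B) d (Lam A (App (lift d 0) (Var 0)))" using fd by (simp add: ei_fun_eta)
  also have "eq_in [W] (Arr A B) (Lam A (App (lift d 0) (Var 0))) (Lam A (subst a 0 ?P))"
    by (rule ei_lam[OF inner])
  finally show ?thesis using a by (simp add: mk_eq_in)
qed

lemma TM_exponentials: "has_exponentials TM"
  unfolding has_exponentials_def
proof (intro ballI)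
  fix X Y assume "X \<in> Obj TM" "Y \<in> Obj TM"
  then obtain A B where AB: "X = enc A" "Y = enc B" by auto
  have inner: "\<forall>Z \<in> Obj TM. \<forall>f \<in> hom TM (prd TM Z X) Y.
        cur TM Z X Y f \<in> hom TM Z (ex TM X Y) \<and>
        comp TM (ev TM X Y) (prodmap TM (cur TM Z X Y f) (idm TM X)) = f \<and>
        (\<forall>h \<in> hom TM Z (ex TM X Y). comp TM (ev TM X Y) (prodmap TM h (idm TM X)) = f
            \<longrightarrow> h = cur TM Z X Y f)"
  proof (intro ballI)
    fix Z f assume Z: "Z \<in> Obj TM" and f: "f \<in> hom TM (prd TM Z X) Y"
    obtain W where W: "Z = enc W" using Z by auto
    obtain a where a: "typing [Prod W A] a B" "f = mk (Prod W A) B a" using f AB W by (auto simp: hom_TM)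
    note fa = ty_facts[OF a(1)]
    have 1: "cur TM Z X Y f \<in> hom TM Z (ex TM X Y)" using a AB W fa by (simp add: typing_iff)
    have 2: "comp TM (ev TM X Y) (prodmap TM (cur TM Z X Y f) (idm TM X)) = f"
      using TM_ev_cur[OF a(1)] a AB W by simp
    have 3: "\<forall>h \<in> hom TM Z (ex TM X Y). comp TM (ev TM X Y) (prodmap TM h (idm TM X)) = f
            \<longrightarrow> h = cur TM Z X Y f"
    proof (intro ballI impI)
      fix h assume h: "h \<in> hom TM Z (ex TM X Y)" and e: "comp TM (ev TM X Y) (prodmap TM h (idm TM X)) = f"
      obtain d where d: "typing [W] d (Arr A B)" "h = mk W (Arr A B) d" using h AB W by (auto simp: hom_TM)
      show "h = cur TM Z X Y f" using TM_cur_uniq[OF a(1) d(1)] e d a AB W by simp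
    qed
    show "cur TM Z X Y f \<in> hom TM Z (ex TM X Y) \<and>
        comp TM (ev TM X Y) (prodmap TM (cur TM Z X Y f) (idm TM X)) = f \<and>
        (\<forall>h \<in> hom TM Z (ex TM X Y). comp TM (ev TM X Y) (prodmap TM h (idm TM X)) = f
            \<longrightarrow> h = cur TM Z X Y f)" using 1 2 3 by blast
  qed
  have "ex TM X Y \<in> Obj TM \<and> ev TM X Y \<in> hom TM (prd TM (ex TM X Y) X) Y"
    using AB by (simp add: typing_iff)
  then show "ex TM X Y \<in> Obj TM \<and> ev TM X Y \<in> hom TM (prd TM (ex TM X Y) X) Y \<and>
     (\<forall>Z \<in> Obj TM. \<forall>f \<in> hom TM (prd TM Z X) Y.
        cur TM Z X Y f \<in> hom TM Z (ex TM X Y) \<and>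
        comp TM (ev TM X Y) (prodmap TM (cur TM Z X Y f) (idm TM X)) = f \<and>
        (\<forall>h \<in> hom TM Z (ex TM X Y). comp TM (ev TM X Y) (prodmap TM h (idm TM X)) = f
            \<longrightarrow> h = cur TM Z X Y f))" using inner by blast
qed


fun red :: "tm \<Rightarrow> tm" where
  "red (Var i) = Var i"
| "red Unit = Unit"
| "red (Pair t u) = Pair (red t) (red u)"
| "red (Fst t) = (case red t of Pair a b \<Rightarrow> a | t' \<Rightarrow> Fst t')"
| "red (Snd t) = (case red t of Pair a b \<Rightarrow> b | t' \<Rightarrow> Snd t')"
| "red (Lam A t) = Lam A (red t)"
| "red (App t u) = App (red t) (red u)"
| "red (Letmap t u) = Letmap (red t) (red u)"

lemma typing_Pair_inv: "typing \<Gamma> (Pair a b) (Prod A B) \<Longrightarrow> typing \<Gamma> a A \<and> typing \<Gamma> b B"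
  by (simp add: typing_iff split: option.splits)

lemma red_eqv: "typing \<Gamma> t A \<Longrightarrow> eqv \<Gamma> t (red t) A"
proof (induction rule: typing.induct)
  case (T_Var i \<Gamma>) then show ?case using eqv.E_refl[OF typing.T_Var[OF T_Var]] by simp
next
  case (T_Unit \<Gamma>) then show ?case using eqv.E_refl[OF typing.T_Unit] by simp
next
  case (T_Pair \<Gamma> t A u B) then show ?case using eqv.C_Pair[OF T_Pair.IH] by simp
next
  case (T_Fst \<Gamma> t A B)
  have IH: "eqv \<Gamma> t (red t) (Prod A B)" by fact
  show ?case
  proof (cases "\<exists>a b. red t = Pair a b")
    case True then obtain a b where p: "red t = Pair a b" by blast
    have ty: "typing \<Gamma> (Pair a b) (Prod A B)" using eqv_typing2[OF IH] p by simp
    have ta: "typing \<Gamma> a A" and tb: "typing \<Gamma> b B" using typing_Pair_inv[OF ty] by auto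
    have e1: "eqv \<Gamma> (Fst t) (Fst (Pair a b)) A" using eqv.C_Fst[OF IH] p by simp
    have e2: "eqv \<Gamma> (Fst (Pair a b)) a A" by (rule eqv.fst_beta[OF ta tb])
    have "red (Fst t) = a" using p by simp
    then show ?thesis using eqv.E_trans[OF e1 e2] by simp
  next
    case False
    then have "red (Fst t) = Fst (red t)" by (cases "red t") auto
    then show ?thesis using eqv.C_Fst[OF IH] by simp
  qed
next
  case (T_Snd \<Gamma> t A B)
  have IH: "eqv \<Gamma> t (red t) (Prod A B)" by fact
  show ?case
  proof (cases "\<exists>a b. red t = Pair a b")
    case True then obtain a b where p: "red t = Pair a b" by blast
    have ty: "typing \<Gamma> (Pair a b) (Prod A B)" using eqv_typing2[OF IH] p by simp
    have ta: "typing \<Gamma> a A" and tb: "typing \<Gamma> b B" using typing_Pair_inv[OF ty] by auto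
    have e1: "eqv \<Gamma> (Snd t) (Snd (Pair a b)) B" using eqv.C_Snd[OF IH] p by simp
    have e2: "eqv \<Gamma> (Snd (Pair a b)) b B" by (rule eqv.snd_beta[OF ta tb])
    have "red (Snd t) = b" using p by simp
    then show ?thesis using eqv.E_trans[OF e1 e2] by simp
  next
    case False
    then have "red (Snd t) = Snd (red t)" by (cases "red t") auto
    then show ?thesis using eqv.C_Snd[OF IH] by simp
  qed
next
  case (T_Lam A \<Gamma> t B) then show ?case using eqv.C_Lam[OF T_Lam.IH] by simp
next
  case (T_App \<Gamma> t A B u) then show ?case using eqv.C_App[OF T_App.IH] by simp
next
  case (T_Letmap \<Gamma> t A u B) then show ?case using eqv.C_Letmap[OF T_Letmap.IH] by simp
qed

lemma ei_red: "check \<Gamma> t = Some A \<Longrightarrow> eq_in \<Gamma> A t (red t)"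
  unfolding eq_in_def by (rule red_eqv) (simp add: typing_iff)

lemma TM_functor: "is_endofunctor TM"
proof -
  have c1: "\<forall>X \<in> Obj TM. DO TM X \<in> Obj TM \<and> DA TM (idm TM X) = idm TM (DO TM X)"
  proof
    fix X assume "X \<in> Obj TM"
    then obtain A where A: "X = enc A" by auto
    have "eq_in [Dia A] (Dia A) (Letmap (Var 0) (Var 0)) (Var 0)" by (rule ei_sym[OF ei_letmap_eta]) simp
    then show "DO TM X \<in> Obj TM \<and> DA TM (idm TM X) = idm TM (DO TM X)" using A by (simp add: typing_iff mk_eq_in)
  qed
  have c2: "\<forall>f \<in> Ar TM. DA TM f \<in> hom TM (DO TM (dom TM f)) (DO TM (cod TM f))"
  proof
    fix f assume "f \<in> Ar TM"
    then obtain X Y a where a: "typing [X] a Y" "f = mk X Y a" by (auto elim!: Ar_TM_E)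
    show "DA TM f \<in> hom TM (DO TM (dom TM f)) (DO TM (cod TM f))" using a ty_facts[OF a(1)] by (simp add: typing_iff)
  qed
  have c3: "\<forall>f \<in> Ar TM. \<forall>g \<in> Ar TM. cod TM f = dom TM g \<longrightarrow> DA TM (comp TM g f) = comp TM (DA TM g) (DA TM f)"
  proof (intro ballI impI)
    fix f g assume f: "f \<in> Ar TM" and g: "g \<in> Ar TM" and fg: "cod TM f = dom TM g"
    obtain X Y a where a: "typing [X] a Y" "f = mk X Y a" using f by (auto elim!: Ar_TM_E)
    obtain Y' Z c where c: "typing [Y'] c Z" "g = mk Y' Z c" using g by (auto elim!: Ar_TM_E)
    have Y': "Y' = Y" using fg a c by simp
    note fa = ty_facts[OF a(1)] and fc = ty_facts[OF c(1)[unfolded Y']]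
    have "eq_in [Dia X] (Dia Z) (Letmap (Letmap (Var 0) a) c) (Letmap (Var 0) (subst (lift c 1) 0 a))"
      by (rule ei_letmap_beta[where A=X and B=Y]) (use fa fc in simp_all)
    then have "eq_in [Dia X] (Dia Z) (Letmap (Var 0) (subst c 0 a)) (Letmap (Letmap (Var 0) a) c)"
      using fc by (simp add: ei_sym)
    then show "DA TM (comp TM g f) = comp TM (DA TM g) (DA TM f)"
      using a c Y' fa fc by (simp add: typing_iff mk_eq_in)
  qed
  show ?thesis unfolding is_endofunctor_def using c1 c2 c3 by blast
qed


lemma mk_red_eq: "check [X] t = Some Y \<Longrightarrow> check [X] s = Some Y \<Longrightarrow> eq_in [X] Y (red t) (red s) \<Longrightarrow> mk X Y t = mk X Y s"
proof -
  assume t: "check [X] t = Some Y" and s: "check [X] s = Some Y" and e: "eq_in [X] Y (red t) (red s)"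
  have "eq_in [X] Y t (red t)" using ei_red[OF t] .
  also note e
  also have "eq_in [X] Y (red s) s" using ei_sym[OF ei_red[OF s]] .
  finally show ?thesis by (rule mk_eq_in)
qed

lemma ei_meet: "eq_in G T a a' \<Longrightarrow> eq_in G T b b' \<Longrightarrow> a' = b' \<Longrightarrow> eq_in G T a b"
  using eq_in_trans ei_sym by metis

lemma ei_lb_red: "check G t = Some (Dia A) \<Longrightarrow> check (A # G) u = Some B \<Longrightarrow> check (B # G) u' = Some C \<Longrightarrow>
  eq_in G (Dia C) (Letmap (Letmap t u) u') (red (Letmap t (subst (lift u' 1) 0 u)))"
proof -
  assume a: "check G t = Some (Dia A)" "check (A # G) u = Some B" "check (B # G) u' = Some C"
  have "eq_in G (Dia C) (Letmap (Letmap t u) u') (Letmap t (subst (lift u' 1) 0 u))"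
    using ei_letmap_beta[OF a] .
  also have "eq_in G (Dia C) (Letmap t (subst (lift u' 1) 0 u)) (red (Letmap t (subst (lift u' 1) 0 u)))"
  proof (rule ei_red)
    have "typing G (Letmap (Letmap t u) u') (Dia C)" using a by (simp add: typing_iff)
    have "eqv G (Letmap (Letmap t u) u') (Letmap t (subst (lift u' 1) 0 u)) (Dia C)"
      using ei_letmap_beta[OF a] unfolding eq_in_def .
    from eqv_typing2[OF this] show "check G (Letmap t (subst (lift u' 1) 0 u)) = Some (Dia C)" by (simp add: typing_iff)
  qed
  finally show ?thesis .
qed

lemma TM_st_nat:
  assumes a: "typing [X] a X'" and c: "typing [Y] c Y'"
  shows "comp TM (st TM (enc X') (enc Y')) (prodmap TM (mk X X' a) (DA TM (mk Y Y' c)))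
       = comp TM (DA TM (prodmap TM (mk X X' a) (mk Y Y' c))) (st TM (enc X) (enc Y))"
proof -
  note fa = ty_facts[OF a] and fc = ty_facts[OF c]
  let ?G = "[Prod X (Dia Y)]" and ?T = "Dia (Prod X' Y')"
  let ?F0 = "subst a 0 (Fst (Var 0))" and ?F1 = "subst a 0 (Fst (Var 1))"
  let ?Lc0 = "Letmap (Snd (Var 0)) c" and ?Lc1 = "Letmap (Snd (Var 1)) c"
  let ?LT = "Letmap (Snd (Pair ?F0 ?Lc0)) (Pair (Fst (Pair ?F1 ?Lc1)) (Var 0))"
  let ?RT = "Letmap (Letmap (Snd (Var 0)) (Pair (Fst (Var 1)) (Var 0))) (Pair ?F0 (subst c 0 (Snd (Var 0))))"
  let ?N = "Letmap (Snd (Var 0)) (Pair ?F1 c)"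
  have L: "comp TM (st TM (enc X') (enc Y')) (prodmap TM (mk X X' a) (DA TM (mk Y Y' c))) = mk (Prod X (Dia Y)) ?T ?LT"
    using fa fc a c by (simp add: typing_iff prodmap_def)
  have R: "comp TM (DA TM (prodmap TM (mk X X' a) (mk Y Y' c))) (st TM (enc X) (enc Y)) = mk (Prod X (Dia Y)) ?T ?RT"
    using fa fc a c by (simp add: typing_iff prodmap_def)
  have "eq_in ?G ?T ?LT (Letmap ?Lc0 (Pair ?F1 (Var 0)))"
    by (rule ei_letmap[where A=Y', OF ei_snd_beta ei_pair[OF ei_fst_beta ei_refl]]) (use fa fc in simp_all)
  also have "eq_in ?G ?T (Letmap ?Lc0 (Pair ?F1 (Var 0))) (Letmap (Snd (Var 0)) (subst (lift (Pair ?F1 (Var 0)) 1) 0 c))"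
    by (rule ei_letmap_beta[where A=Y and B=Y']) (use fa fc in simp_all)
  also have "subst (lift (Pair ?F1 (Var 0)) 1) 0 c = Pair ?F1 c" using fa fc by simp
  finally have l: "eq_in ?G ?T ?LT ?N" .
  let ?P = "Pair (Fst (Var 1)) (Var 0)"
  have "eq_in ?G ?T ?RT (Letmap (Snd (Var 0)) (subst (lift (Pair ?F0 (subst c 0 (Snd (Var 0)))) 1) 0 ?P))"
    by (rule ei_letmap_beta[where A=Y and B="Prod X Y"]) (use fa fc in simp_all)
  also have "subst (lift (Pair ?F0 (subst c 0 (Snd (Var 0)))) 1) 0 ?P = Pair (subst a 0 (Fst ?P)) (subst c 0 (Snd ?P))"
    using fa fc by simp
  also have "eq_in ?G ?T (Letmap (Snd (Var 0)) (Pair (subst a 0 (Fst ?P)) (subst c 0 (Snd ?P))))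
       (Letmap (Snd (Var 0)) (Pair ?F1 (subst c 0 (Var 0))))"
    by (rule ei_letmap[where A=Y, OF ei_refl ei_pair[OF ei_subst_arg[where B=X] ei_subst_arg[where B=Y]]],
        (use fa fc in simp_all), (rule ei_fst_beta; simp), (rule ei_snd_beta; simp))
  also have "subst c 0 (Var 0) = c" using fc by simp
  finally have r: "eq_in ?G ?T ?RT ?N" .
  have "mk (Prod X (Dia Y)) ?T ?LT = mk (Prod X (Dia Y)) ?T ?RT"
    using l r ei_sym eq_in_trans mk_eq_in by metis
  then show ?thesis using L R by simp
qed


lemma TM_st_unit: "comp TM (DA TM (pr2 TM (trm TM) (enc A))) (st TM (trm TM) (enc A)) = pr2 TM (trm TM) (DO TM (enc A))"
  apply (simp add: typing_iff)
  apply (rule mk_red_eq)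
    apply (simp_all add: typing_iff)
  apply (rule ei_meet[OF ei_lb_red[where A=A and B="Prod One A"] ei_letmap_eta[where A=A]])
     apply simp_all
  done

lemma TM_st_assoc: "comp TM (DA TM (assoc TM (enc A) (enc B) (enc D))) (st TM (prd TM (enc A) (enc B)) (enc D))
        = comp TM (st TM (enc A) (prd TM (enc B) (enc D)))
            (comp TM (prodmap TM (idm TM (enc A)) (st TM (enc B) (enc D))) (assoc TM (enc A) (enc B) (DO TM (enc D))))"
  apply (simp add: typing_iff prodmap_def assoc_def)
  apply (rule mk_red_eq)
    apply (simp_all add: typing_iff)
  apply (rule ei_meet[OF ei_lb_red[where A=D and B="Prod (Prod A B) D"] ei_lb_red[where A=D and B="Prod B D"]])
     apply simp_all
  done


lemma TM_strength: "is_strength TM"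
proof -
  have c1: "\<forall>X \<in> Obj TM. \<forall>Y \<in> Obj TM. st TM X Y \<in> hom TM (prd TM X (DO TM Y)) (DO TM (prd TM X Y))"
    by (auto simp: typing_iff)
  have c2: "\<forall>f \<in> Ar TM. \<forall>g \<in> Ar TM.
        comp TM (st TM (cod TM f) (cod TM g)) (prodmap TM f (DA TM g))
        = comp TM (DA TM (prodmap TM f g)) (st TM (dom TM f) (dom TM g))"
  proof (intro ballI)
    fix f g assume f: "f \<in> Ar TM" and g: "g \<in> Ar TM"
    obtain X X' a where a: "typing [X] a X'" "f = mk X X' a" using f by (auto elim!: Ar_TM_E)
    obtain Y Y' c where c: "typing [Y] c Y'" "g = mk Y Y' c" using g by (auto elim!: Ar_TM_E)
    show "comp TM (st TM (cod TM f) (cod TM g)) (prodmap TM f (DA TM g))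
        = comp TM (DA TM (prodmap TM f g)) (st TM (dom TM f) (dom TM g))"
      using TM_st_nat[OF a(1) c(1)] a(2) c(2) by simp
  qed
  have c3: "\<forall>X \<in> Obj TM. comp TM (DA TM (pr2 TM (trm TM) X)) (st TM (trm TM) X) = pr2 TM (trm TM) (DO TM X)"
    using TM_st_unit by auto
  have c4: "\<forall>X \<in> Obj TM. \<forall>Y \<in> Obj TM. \<forall>Z \<in> Obj TM.
        comp TM (DA TM (assoc TM X Y Z)) (st TM (prd TM X Y) Z)
        = comp TM (st TM X (prd TM Y Z))
            (comp TM (prodmap TM (idm TM X) (st TM Y Z)) (assoc TM X Y (DO TM Z)))"
    using TM_st_assoc by auto
  show ?thesis unfolding is_strength_def using c1 c2 c3 c4 by blast
qed

lemma TM_model: "is_model TM (enc Base)"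
  unfolding is_model_def using TM_category TM_terminal TM_products TM_exponentials TM_functor TM_strength by simp

primrec ctxty :: "ty list \<Rightarrow> ty" where
  "ctxty [] = One"
| "ctxty (A # \<Gamma>) = Prod (ctxty \<Gamma>) A"

primrec tuple :: "ty list \<Rightarrow> tm" where
  "tuple [] = Unit"
| "tuple (A # \<Gamma>) = Pair (lift (tuple \<Gamma>) 0) (Var 0)"

lemma tuple_typing: "typing \<Gamma> (tuple \<Gamma>) (ctxty \<Gamma>)"
proof (induction \<Gamma>)
  case Nil then show ?case by (simp add: typing.T_Unit)
next
  case (Cons A \<Gamma>)
  have "typing (A # \<Gamma>) (lift (tuple \<Gamma>) 0) (ctxty \<Gamma>)" using typing_lift0[OF Cons.IH] .
  moreover have "typing (A # \<Gamma>) (Var 0) A" using typing.T_Var[of 0 "A # \<Gamma>"] by simp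
  ultimately show ?case by (simp add: typing.T_Pair)
qed

lemma ity_TM[simp]: "ity TM (enc Base) A = enc A"
  by (induction A) simp_all

lemma ictx_TM[simp]: "ictx TM (enc Base) \<Gamma> = enc (ctxty \<Gamma>)"
  by (induction \<Gamma>) simp_all

lemma eqv_append: "eqv \<Gamma> t u A \<Longrightarrow> eqv (\<Gamma> @ \<Delta>) t u A"
proof (induction \<Delta> rule: rev_induct)
  case Nil then show ?case by simp
next
  case (snoc B \<Delta>)
  then show ?case using eqv_append1[of "\<Gamma> @ \<Delta>" t u A B] by simp
qed

lemma ivar_TM: "i < length \<Gamma> \<Longrightarrow> \<exists>p. typing [ctxty \<Gamma>] p (\<Gamma> ! i) \<and> ivar TM (enc Base) \<Gamma> i = mk (ctxty \<Gamma>) (\<Gamma> ! i) p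
   \<and> eqv \<Gamma> (subst p 0 (tuple \<Gamma>)) (Var i) (\<Gamma> ! i)"
proof (induction \<Gamma> arbitrary: i)
  case Nil then show ?case by simp
next
  case (Cons A \<Gamma>)
  have tl: "typing (A # \<Gamma>) (lift (tuple \<Gamma>) 0) (ctxty \<Gamma>)" using typing_lift0[OF tuple_typing] .
  show ?case
  proof (cases i)
    case 0
    have "eqv (A # \<Gamma>) (Snd (Pair (lift (tuple \<Gamma>) 0) (Var 0))) (Var 0) A"
      by (rule eqv.snd_beta[OF tl]) (simp add: typing_iff)
    then show ?thesis using 0 by (intro exI[of _ "Snd (Var 0)"]) (simp add: typing_iff)
  next
    case (Suc j)
    then have j: "j < length \<Gamma>" using Cons.prems by simp
    obtain p where p: "typing [ctxty \<Gamma>] p (\<Gamma> ! j)" "ivar TM (enc Base) \<Gamma> j = mk (ctxty \<Gamma>) (\<Gamma> ! j) p"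
      "eqv \<Gamma> (subst p 0 (tuple \<Gamma>)) (Var j) (\<Gamma> ! j)" using Cons.IH[OF j] by blast
    note fp = ty_facts[OF p(1)]
    let ?q = "subst p 0 (Fst (Var 0))"
    have tq: "typing [Prod (ctxty \<Gamma>) A] ?q (\<Gamma> ! j)" using fp by (simp add: typing_iff)
    have iv: "ivar TM (enc Base) (A # \<Gamma>) i = mk (ctxty (A # \<Gamma>)) ((A # \<Gamma>) ! i) ?q"
      using Suc p fp by (simp add: typing_iff)
    have s: "subst ?q 0 (tuple (A # \<Gamma>)) = subst p 0 (Fst (Pair (lift (tuple \<Gamma>) 0) (Var 0)))" using fp by simp
    have "eq_in (A # \<Gamma>) (\<Gamma> ! j) (subst p 0 (Fst (Pair (lift (tuple \<Gamma>) 0) (Var 0)))) (subst p 0 (lift (tuple \<Gamma>) 0))"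
      by (rule ei_subst_arg[where B="ctxty \<Gamma>"]) (use fp tl in \<open>simp_all add: typing_iff ei_fst_beta\<close>)
    also have "subst p 0 (lift (tuple \<Gamma>) 0) = lift (subst p 0 (tuple \<Gamma>)) 0" using fp by simp
    also have "eq_in (A # \<Gamma>) (\<Gamma> ! j) (lift (subst p 0 (tuple \<Gamma>)) 0) (lift (Var j) 0)"
      using eqv_lift0[OF p(3)] unfolding eq_in_def .
    finally have "eqv (A # \<Gamma>) (subst ?q 0 (tuple (A # \<Gamma>))) (Var i) ((A # \<Gamma>) ! i)"
      using s Suc unfolding eq_in_def by simp
    then show ?thesis using tq iv Suc by auto
  qed
qed


lemma sem_TM: "typing \<Gamma> t A \<Longrightarrow> \<exists>t'. typing [ctxty \<Gamma>] t' A \<and> sem TM (enc Base) \<Gamma> t = mk (ctxty \<Gamma>) A t'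
   \<and> eqv \<Gamma> (subst t' 0 (tuple \<Gamma>)) t A"
proof (induction rule: typing.induct)
  case (T_Var i \<Gamma>)
  then obtain p where "typing [ctxty \<Gamma>] p (\<Gamma> ! i)" "ivar TM (enc Base) \<Gamma> i = mk (ctxty \<Gamma>) (\<Gamma> ! i) p"
      "eqv \<Gamma> (subst p 0 (tuple \<Gamma>)) (Var i) (\<Gamma> ! i)" using ivar_TM by blast
  then show ?case by auto
next
  case (T_Unit \<Gamma>)
  have "eqv \<Gamma> Unit Unit One" by (rule eqv.E_refl[OF typing.T_Unit])
  then show ?case by (intro exI[of _ Unit]) (simp add: typing_iff)
next
  case (T_Pair \<Gamma> t A u B)
  from T_Pair.IH obtain t1 u1 where t1: "typing [ctxty \<Gamma>] t1 A" "sem TM (enc Base) \<Gamma> t = mk (ctxty \<Gamma>) A t1"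
     "eqv \<Gamma> (subst t1 0 (tuple \<Gamma>)) t A" and u1: "typing [ctxty \<Gamma>] u1 B" "sem TM (enc Base) \<Gamma> u = mk (ctxty \<Gamma>) B u1"
     "eqv \<Gamma> (subst u1 0 (tuple \<Gamma>)) u B" by blast
  show ?case
    by (rule exI[of _ "Pair t1 u1"]) (use t1 u1 in \<open>simp add: typing.T_Pair eqv.C_Pair\<close>)
next
  case (T_Fst \<Gamma> t A B)
  from T_Fst.IH obtain t1 where t1: "typing [ctxty \<Gamma>] t1 (Prod A B)" "sem TM (enc Base) \<Gamma> t = mk (ctxty \<Gamma>) (Prod A B) t1"
     "eqv \<Gamma> (subst t1 0 (tuple \<Gamma>)) t (Prod A B)" by blast
  have "sem TM (enc Base) \<Gamma> (Fst t) = mk (ctxty \<Gamma>) A (Fst t1)"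
    using t1 tyof_typing[OF T_Fst(1)] by (simp add: typing_iff)
  then show ?case using t1 typing.T_Fst[OF t1(1)] eqv.C_Fst[OF t1(3)] by auto
next
  case (T_Snd \<Gamma> t A B)
  from T_Snd.IH obtain t1 where t1: "typing [ctxty \<Gamma>] t1 (Prod A B)" "sem TM (enc Base) \<Gamma> t = mk (ctxty \<Gamma>) (Prod A B) t1"
     "eqv \<Gamma> (subst t1 0 (tuple \<Gamma>)) t (Prod A B)" by blast
  have "sem TM (enc Base) \<Gamma> (Snd t) = mk (ctxty \<Gamma>) B (Snd t1)"
    using t1 tyof_typing[OF T_Snd(1)] by (simp add: typing_iff)
  then show ?case using t1 typing.T_Snd[OF t1(1)] eqv.C_Snd[OF t1(3)] by auto
next
  case (T_App \<Gamma> t A B u)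
  from T_App.IH obtain t1 u1 where t1: "typing [ctxty \<Gamma>] t1 (Arr A B)" "sem TM (enc Base) \<Gamma> t = mk (ctxty \<Gamma>) (Arr A B) t1"
     "eqv \<Gamma> (subst t1 0 (tuple \<Gamma>)) t (Arr A B)" and u1: "typing [ctxty \<Gamma>] u1 A" "sem TM (enc Base) \<Gamma> u = mk (ctxty \<Gamma>) A u1"
     "eqv \<Gamma> (subst u1 0 (tuple \<Gamma>)) u A" by blast
  let ?t' = "App (Fst (Pair t1 u1)) (Snd (Pair t1 u1))"
  have ty: "typing [ctxty \<Gamma>] ?t' B" using t1 u1 by (simp add: typing_iff)
  have s: "sem TM (enc Base) \<Gamma> (App t u) = mk (ctxty \<Gamma>) B ?t'"
    using t1 u1 tyof_typing[OF T_App(1)] by (simp add: typing_iff)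
  let ?s1 = "subst t1 0 (tuple \<Gamma>)" and ?s2 = "subst u1 0 (tuple \<Gamma>)"
  have ts1: "typing \<Gamma> ?s1 (Arr A B)" and ts2: "typing \<Gamma> ?s2 A" using t1(3) u1(3) eqv_typing1 by blast+
  have e1: "eqv \<Gamma> (Fst (Pair ?s1 ?s2)) t (Arr A B)" using eqv.E_trans[OF eqv.fst_beta[OF ts1 ts2] t1(3)] .
  have e2: "eqv \<Gamma> (Snd (Pair ?s1 ?s2)) u A" using eqv.E_trans[OF eqv.snd_beta[OF ts1 ts2] u1(3)] .
  have "eqv \<Gamma> (subst ?t' 0 (tuple \<Gamma>)) (App t u) B" using eqv.C_App[OF e1 e2] by simp
  then show ?case using ty s by blast
next
  case (T_Lam A \<Gamma> t B)
  from T_Lam.IH obtain t1 where t1: "typing [Prod (ctxty \<Gamma>) A] t1 B" "sem TM (enc Base) (A # \<Gamma>) t = mk (Prod (ctxty \<Gamma>) A) B t1"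
     "eqv (A # \<Gamma>) (subst t1 0 (Pair (lift (tuple \<Gamma>) 0) (Var 0))) t B" by auto
  note f1 = ty_facts[OF t1(1)]
  let ?t' = "Lam A (subst t1 0 (Pair (Var 1) (Var 0)))"
  have ty: "typing [ctxty \<Gamma>] ?t' (Arr A B)" using f1 by (simp add: typing_iff)
  have s: "sem TM (enc Base) \<Gamma> (Lam A t) = mk (ctxty \<Gamma>) (Arr A B) ?t'"
    using t1 tyof_typing[OF T_Lam(1)] by simp
  have "subst ?t' 0 (tuple \<Gamma>) = Lam A (subst t1 0 (Pair (lift (tuple \<Gamma>) 0) (Var 0)))" using f1 by simp
  then have "eqv \<Gamma> (subst ?t' 0 (tuple \<Gamma>)) (Lam A t) (Arr A B)" using eqv.C_Lam[OF t1(3)] by simp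
  then show ?case using ty s by blast
next
  case (T_Letmap \<Gamma> t A u B)
  from T_Letmap.IH obtain t1 u1 where t1: "typing [ctxty \<Gamma>] t1 (Dia A)" "sem TM (enc Base) \<Gamma> t = mk (ctxty \<Gamma>) (Dia A) t1"
     "eqv \<Gamma> (subst t1 0 (tuple \<Gamma>)) t (Dia A)" and u1: "typing [Prod (ctxty \<Gamma>) A] u1 B"
     "sem TM (enc Base) (A # \<Gamma>) u = mk (Prod (ctxty \<Gamma>) A) B u1"
     "eqv (A # \<Gamma>) (subst u1 0 (Pair (lift (tuple \<Gamma>) 0) (Var 0))) u B" by auto
  note f1 = ty_facts[OF t1(1)] and g1 = ty_facts[OF u1(1)]
  have f1l: "\<forall>B \<Delta>. check (B # ctxty \<Gamma> # \<Delta>) (lift t1 0) = Some (Dia A)"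
    using typing_lift0[OF typing_append[OF t1(1)]] by (simp add: typing_iff)
  let ?X = "ctxty \<Gamma>"
  let ?t' = "Letmap t1 (subst u1 0 (Pair (Var 1) (Var 0)))"
  let ?S = "Letmap (Letmap (Snd (Pair (Var 0) t1)) (Pair (Fst (Pair (Var 1) (lift t1 0))) (Var 0))) u1"
  have ty: "typing [?X] ?t' (Dia B)" using f1 g1 by (simp add: typing_iff)
  have s0: "sem TM (enc Base) \<Gamma> (Letmap t u) = mk ?X (Dia B) ?S"
    using t1 u1 f1 g1 f1l tyof_typing[OF T_Letmap(1)] by (simp add: typing_iff)
  have "eq_in [?X] (Dia B) ?S (Letmap (Letmap t1 (Pair (Var 1) (Var 0))) u1)"
    by (rule ei_letmap[where A="Prod ?X A", OF ei_letmap[where A=A, OF ei_snd_beta ei_pair[OF ei_fst_beta ei_refl]] ei_refl])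
      (use f1 g1 f1l in simp_all)
  also have "eq_in [?X] (Dia B) (Letmap (Letmap t1 (Pair (Var 1) (Var 0))) u1) (Letmap t1 (subst (lift u1 1) 0 (Pair (Var 1) (Var 0))))"
    by (rule ei_letmap_beta[where A=A and B="Prod ?X A"]) (use f1 g1 in simp_all)
  also have "subst (lift u1 1) 0 (Pair (Var 1) (Var 0)) = subst u1 0 (Pair (Var 1) (Var 0))" using g1 by simp
  finally have s: "sem TM (enc Base) \<Gamma> (Letmap t u) = mk ?X (Dia B) ?t'" using s0 mk_eq_in by simp
  have "subst ?t' 0 (tuple \<Gamma>) = Letmap (subst t1 0 (tuple \<Gamma>)) (subst u1 0 (Pair (lift (tuple \<Gamma>) 0) (Var 0)))"
    using g1 by simp
  then have "eqv \<Gamma> (subst ?t' 0 (tuple \<Gamma>)) (Letmap t u) (Dia B)" using eqv.C_Letmap[OF t1(3) u1(3)] by simp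
  then show ?case using ty s by blast
qed

lemma completeness:
  assumes t: "typing \<Gamma> t A" and u: "typing \<Gamma> u A"
    and h: "\<forall>(C :: (nat, nat) sccc) b. is_model C b \<longrightarrow> sem C b \<Gamma> t = sem C b \<Gamma> u"
  shows "eqv \<Gamma> t u A"
proof -
  obtain t' where t': "typing [ctxty \<Gamma>] t' A" "sem TM (enc Base) \<Gamma> t = mk (ctxty \<Gamma>) A t'"
     "eqv \<Gamma> (subst t' 0 (tuple \<Gamma>)) t A" using sem_TM[OF t] by blast
  obtain u' where u': "typing [ctxty \<Gamma>] u' A" "sem TM (enc Base) \<Gamma> u = mk (ctxty \<Gamma>) A u'"
     "eqv \<Gamma> (subst u' 0 (tuple \<Gamma>)) u A" using sem_TM[OF u] by blast
  have "sem TM (enc Base) \<Gamma> t = sem TM (enc Base) \<Gamma> u" using h TM_model by blast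
  then have e: "eqv [ctxty \<Gamma>] t' u' A" using t'(2) u'(2) mk_eq[OF t'(1) u'(1)] by simp
  have e': "eqv (ctxty \<Gamma> # \<Gamma>) t' u' A" using eqv_append[OF e, of \<Gamma>] by simp
  have "eqv \<Gamma> (subst t' 0 (tuple \<Gamma>)) (subst u' 0 (tuple \<Gamma>)) A"
    using eqv_subst0[OF e' eqv.E_refl[OF tuple_typing]] .
  then show ?thesis using t'(3) u'(3) by (meson eqv.E_sym eqv.E_trans)
qed

theorem proposition3p1:
  assumes "typing \<Gamma> t A" and "typing \<Gamma> u A"
  shows "(eqv \<Gamma> t u A \<longleftrightarrow>
           (\<forall>(C :: (nat, nat) sccc) b. is_model C b \<longrightarrow> sem C b \<Gamma> t = sem C b \<Gamma> u))
       \<and> (eqv \<Gamma> t u A \<longrightarrow>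
           (\<forall>(C :: ('o, 'm) sccc) b. is_model C b \<longrightarrow> sem C b \<Gamma> t = sem C b \<Gamma> u))"
proof -
  have s1: "eqv \<Gamma> t u A \<longrightarrow> (\<forall>(C :: (nat, nat) sccc) b. is_model C b \<longrightarrow> sem C b \<Gamma> t = sem C b \<Gamma> u)"
  proof (intro impI allI)
    fix C :: "(nat, nat) sccc" and b :: "nat"
    assume "eqv \<Gamma> t u A" "is_model C b"
    then show "sem C b \<Gamma> t = sem C b \<Gamma> u" by (rule soundness)
  qed
  have s2: "eqv \<Gamma> t u A \<longrightarrow> (\<forall>(C :: ('o, 'm) sccc) b. is_model C b \<longrightarrow> sem C b \<Gamma> t = sem C b \<Gamma> u)"
  proof (intro impI allI)
    fix C :: "('o, 'm) sccc" and b :: "'o"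
    assume "eqv \<Gamma> t u A" "is_model C b"
    then show "sem C b \<Gamma> t = sem C b \<Gamma> u" by (rule soundness)
  qed
  have c: "(\<forall>(C :: (nat, nat) sccc) b. is_model C b \<longrightarrow> sem C b \<Gamma> t = sem C b \<Gamma> u) \<longrightarrow> eqv \<Gamma> t u A"
    using completeness[OF assms] by blast
  show ?thesis using s1 s2 c by blast
qed


end
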